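(* Linear $\mathrm{HTA}_\pm$ and $\mathrm{CTL}_\pm$ are equivalent formalisms: for every linear $\mathrm{HTA}_\pm$ $\mathcal{A}$ over $\Sigma=2^{AP}$ there is a $\mathrm{CTL}_\pm$ formula $\varphi$ with $\mathcal{L}(\mathcal{A})=\mathcal{L}(\varphi)$, and for every $\mathrm{CTL}_\pm$ formula $\varphi$ over $AP$ there is a linear $\mathrm{HTA}_\pm$ $\mathcal{A}$ with $\mathcal{L}(\mathcal{A})=\mathcal{L}(\varphi)$.
   Context: Fix a finite set $AP$, $\Sigma=2^{AP}$; $\Sigma$-trees are unranked (finitely many children per node), unordered, leafless trees labelled by $\Sigma$. $\mathrm{CTL}_\pm$: $\varphi ::= p\mid\neg\varphi\mid\varphi\lor\varphi\mid\mathsf{D}^n\varphi\mid\mathsf{E}\mathsf{X}\varphi\mid\mathsf{E}(\varphi\,\mathsf{U}\,\varphi)$, evaluated at node $u$: $p$ iff $p\in t(u)$; Booleans usual; $\mathsf{D}^n\varphi$ iff $u$ has at least $n$ distinct children satisfying $\varphi$; $\mathsf{E}\mathsf{X}\varphi$ iff some child of $u$ satisfies $\varphi$; $\mathsf{E}(\varphi_1\mathsf{U}\varphi_2)$ iff some downward path $u=v_0,\dots,v_j$ has $v_j\models\varphi_2$ and $v_k\models\varphi_1$ for $k<j$. $\mathcal{L}(\varphi)$: trees whose root satisfies $\varphi$. An $\mathrm{HTA}_\pm$ is $\mathcal{A}=\langle Q,\Sigma,\delta,q_I,F\rangle$, $Q$ finite, $q_I\in Q$, $F\subseteq Q$, $\delta:Q\times\Sigma\to\mathcal{B}^+(\{\Diamond_k,\Box_k\}_{k\in\mathbb{N}}\times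 Q)$ (positive Boolean formulae with $\top,\bot,\land,\lor$ over atoms; $\Diamond=\Diamond_1$, $\Box=\Box_1$). A run on $t$ from $s$: tree $r$ labelled in $Q\times\mathrm{Dom}(t)$, root $(q_I,s)$, each node $x$ labelled $(q,v)$ satisfies $\delta(q,t(v))$ where $x\models(\Diamond_k,q')$ iff $x$ has children labelled $(q',v_1),\dots,(q',v_k)$ for pairwise distinct children $v_i$ of $v$, and $x\models(\Box_k,q')$ iff for all but at most $k-1$ children $v'$ of $v$ some child of $x$ is labelled $(q',v')$. Accepting: every infinite path of $r$ from its root has infinitely many nodes with state in $F$. $\mathcal{L}(\mathcal{A})$: trees with an accepting run from the root. Hesitant: $Q$ partitioned into nonempty components $Q_1,\dots,Q_n$, totally ordered so that if $q\in Q_i$, $q'\in Q_j$ and $q'$ occurs in $\delta(q,\sigma)$ then $j\le i$, each component being exactly one of: transient (no atom with state in $Q_i$ occurs in $\delta(q,\sigma)$, $q\in Q_i$); existential (such $Q_i$-atoms all of form $(\Diamond,q')$, at most one in each clause of the DNF of $\delta(q,\sigma)$); universal (all of form $(\Box,q')$, at most one in each clause of the CNF). Polarised: states of existential components are not in $F$, states of universal components are in $F$. Linear: every component is a singleton. *)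

theory Defs
  imports Main
begin

record 'l ltree =
  nodes :: "nat list set"
  label :: "nat list \<Rightarrow> 'l"

definition children :: "'l ltree \<Rightarrow> nat list \<Rightarrow> nat list set" where
  "children T u = {v \<in> nodes T. \<exists>i. v = u @ [i]}"

definition tree_domain :: "'l ltree \<Rightarrow> bool" where
  "tree_domain T \<longleftrightarrow> [] \<in> nodes T \<and> (\<forall>u i. u @ [i] \<in> nodes T \<longrightarrow> u \<in> nodes T)"

text \<open>Sigma-trees: unranked (finitely many children), leafless, labelled by 2^AP.
  Unorderedness: the order of child indices plays no role in any semantics below.\<close>
definition sigma_tree :: "'ap set ltree \<Rightarrow> bool" where
  "sigma_tree t \<longleftrightarrow> tree_domain t \<and>
     (\<forall>u \<in> nodes t. finite (children t u) \<and> children t u \<noteq> {})"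

datatype 'ap ctl =
    Prop 'ap
  | Neg "'ap ctl"
  | Or "'ap ctl" "'ap ctl"
  | Dn nat "'ap ctl"
  | EXn "'ap ctl"
  | EUn "'ap ctl" "'ap ctl"

primrec ctl_sat :: "'ap set ltree \<Rightarrow> nat list \<Rightarrow> 'ap ctl \<Rightarrow> bool" where
  "ctl_sat t u (Prop p) \<longleftrightarrow> p \<in> label t u"
| "ctl_sat t u (Neg \<phi>) \<longleftrightarrow> \<not> ctl_sat t u \<phi>"
| "ctl_sat t u (Or \<phi> \<psi>) \<longleftrightarrow> ctl_sat t u \<phi> \<or> ctl_sat t u \<psi>"
| "ctl_sat t u (Dn n \<phi>) \<longleftrightarrow> n \<le> card {v \<in> children t u. ctl_sat t v \<phi>}"
| "ctl_sat t u (EXn \<phi>) \<longleftrightarrow> (\<exists>v \<in> children t u. ctl_sat t v \<phi>)"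
| "ctl_sat t u (EUn \<phi> \<psi>) \<longleftrightarrow>
     (\<exists>(j::nat) (p::nat \<Rightarrow> nat list). p 0 = u \<and> (\<forall>k<j. p (Suc k) \<in> children t (p k))
        \<and> ctl_sat t (p j) \<psi> \<and> (\<forall>k<j. ctl_sat t (p k) \<phi>))"

definition ctl_lang :: "'ap ctl \<Rightarrow> 'ap set ltree set" where
  "ctl_lang \<phi> = {t. sigma_tree t \<and> ctl_sat t [] \<phi>}"

datatype 'a pbf = PTrue | PFalse | PAtom 'a | PAnd "'a pbf" "'a pbf" | POr "'a pbf" "'a pbf"

primrec peval :: "('a \<Rightarrow> bool) \<Rightarrow> 'a pbf \<Rightarrow> bool" where
  "peval I PTrue = True"
| "peval I PFalse = False"
| "peval I (PAtom a) = I a"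
| "peval I (PAnd f g) = (peval I f \<and> peval I g)"
| "peval I (POr f g) = (peval I f \<or> peval I g)"

primrec patoms :: "'a pbf \<Rightarrow> 'a set" where
  "patoms PTrue = {}"
| "patoms PFalse = {}"
| "patoms (PAtom a) = {a}"
| "patoms (PAnd f g) = patoms f \<union> patoms g"
| "patoms (POr f g) = patoms f \<union> patoms g"

primrec dnf :: "'a pbf \<Rightarrow> 'a set set" where
  "dnf PTrue = {{}}"
| "dnf PFalse = {}"
| "dnf (PAtom a) = {{a}}"
| "dnf (POr f g) = dnf f \<union> dnf g"
| "dnf (PAnd f g) = {c \<union> d | c d. c \<in> dnf f \<and> d \<in> dnf g}"

primrec cnf :: "'a pbf \<Rightarrow> 'a set set" where
  "cnf PTrue = {}"
| "cnf PFalse = {{}}"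
| "cnf (PAtom a) = {{a}}"
| "cnf (PAnd f g) = cnf f \<union> cnf g"
| "cnf (POr f g) = {c \<union> d | c d. c \<in> cnf f \<and> d \<in> cnf g}"

datatype 'q atom = Dia nat 'q | Box nat 'q

primrec atom_state :: "'q atom \<Rightarrow> 'q" where
  "atom_state (Dia k q) = q"
| "atom_state (Box k q) = q"

primrec atom_index :: "'q atom \<Rightarrow> nat" where
  "atom_index (Dia k q) = k"
| "atom_index (Box k q) = k"

record ('q, 'ap) hta =
  states :: "'q set"
  delta :: "'q \<Rightarrow> 'ap set \<Rightarrow> 'q atom pbf"
  init :: 'q
  acc :: "'q set"

primrec atom_holds ::
  "'ap set ltree \<Rightarrow> ('q \<times> nat list) ltree \<Rightarrow> nat list \<Rightarrow> nat list \<Rightarrow> 'q atom \<Rightarrow> bool" where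
  "atom_holds t r x v (Dia k q') \<longleftrightarrow>
     (\<exists>S. S \<subseteq> children t v \<and> finite S \<and> card S = k \<and>
          (\<forall>v'\<in>S. \<exists>y\<in>children r x. label r y = (q', v')))"
| "atom_holds t r x v (Box k q') \<longleftrightarrow>
     card {v' \<in> children t v. \<not> (\<exists>y\<in>children r x. label r y = (q', v'))} \<le> k - 1"

definition is_run :: "('q, 'ap) hta \<Rightarrow> 'ap set ltree \<Rightarrow> nat list \<Rightarrow> ('q \<times> nat list) ltree \<Rightarrow> bool" where
  "is_run A t s r \<longleftrightarrow> tree_domain r \<and> label r [] = (init A, s) \<and>
     (\<forall>x \<in> nodes r. fst (label r x) \<in> states A \<and> snd (label r x) \<in> nodes t \<and>
        peval (atom_holds t r x (snd (label r x)))
              (delta A (fst (label r x)) (label t (snd (label r x)))))"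

definition accepting :: "('q, 'ap) hta \<Rightarrow> ('q \<times> nat list) ltree \<Rightarrow> bool" where
  "accepting A r \<longleftrightarrow>
     (\<forall>p. p 0 = [] \<and> (\<forall>i. p (Suc i) \<in> children r (p i)) \<longrightarrow>
        infinite {i. fst (label r (p i)) \<in> acc A})"

definition hta_lang :: "('q, 'ap) hta \<Rightarrow> 'ap set ltree set" where
  "hta_lang A = {t. sigma_tree t \<and> (\<exists>r. is_run A t [] r \<and> accepting A r)}"

definition hta_wf :: "('q, 'ap) hta \<Rightarrow> bool" where
  "hta_wf A \<longleftrightarrow> finite (states A) \<and> init A \<in> states A \<and> acc A \<subseteq> states A \<and>
     (\<forall>q \<in> states A. \<forall>\<sigma>. \<forall>a \<in> patoms (delta A q \<sigma>).
        atom_state a \<in> states A \<and> 1 \<le> atom_index a)"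

datatype kind = Transient | Existential | Universal

text \<open>Linear (all components singletons), hesitant, polarised HTA.  The total order of
  the singleton components is given by an injective rank function.\<close>
definition linear_hta :: "('q, 'ap) hta \<Rightarrow> bool" where
  "linear_hta A \<longleftrightarrow> hta_wf A \<and>
    (\<exists>(rank :: 'q \<Rightarrow> nat) (kd :: 'q \<Rightarrow> kind).
       inj_on rank (states A) \<and>
       (\<forall>q \<in> states A. \<forall>\<sigma>. \<forall>a \<in> patoms (delta A q \<sigma>). rank (atom_state a) \<le> rank q) \<and>
       (\<forall>q \<in> states A.
          (kd q = Transient \<longrightarrow>
             (\<forall>\<sigma>. \<forall>a \<in> patoms (delta A q \<sigma>). atom_state a \<noteq> q)) \<and>
          (kd q = Existential \<longrightarrow>
             (\<forall>\<sigma>. (\<forall>a \<in> patoms (delta A q \<sigma>). atom_state a = q \<longrightarrow> a = Dia 1 q) \<and>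
                  (\<forall>c \<in> dnf (delta A q \<sigma>). card {a \<in> c. atom_state a = q} \<le> 1))
             \<and> q \<notin> acc A) \<and>
          (kd q = Universal \<longrightarrow>
             (\<forall>\<sigma>. (\<forall>a \<in> patoms (delta A q \<sigma>). atom_state a = q \<longrightarrow> a = Box 1 q) \<and>
                  (\<forall>c \<in> cnf (delta A q \<sigma>). card {a \<in> c. atom_state a = q} \<le> 1))
             \<and> q \<in> acc A)))"

end

theory Submission
  imports Defs "HOL-Library.Nat_Bijection" "HOL-Library.Countable" "HOL-Library.Infinite_Set"
begin


fun semI :: "'ap set ltree \<Rightarrow> ('q \<Rightarrow> nat list set) \<Rightarrow> nat list \<Rightarrow> 'q atom \<Rightarrow> bool" where
  "semI t G v (Dia k q') = (\<exists>S. S \<subseteq> children t v \<and> finite S \<and> card S = k \<and> S \<subseteq> G q')"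
| "semI t G v (Box k q') = (card {v' \<in> children t v. v' \<notin> G q'} \<le> k - 1)"

lemma semI_cong: "G (atom_state a) = G' (atom_state a) \<Longrightarrow> semI t G v a = semI t G' v a"
  by (cases a) auto

lemma peval_mono: "peval I f \<Longrightarrow> (\<And>a. a \<in> patoms f \<Longrightarrow> I a \<Longrightarrow> J a) \<Longrightarrow> peval J f"
  by (induction f) auto

lemma peval_cong: "(\<And>a. a \<in> patoms f \<Longrightarrow> I a = J a) \<Longrightarrow> peval I f = peval J f"
  by (induction f) auto

lemma dnf_sub: "c \<in> dnf f \<Longrightarrow> c \<subseteq> patoms f"
  by (induction f arbitrary: c) auto

lemma cnf_sub: "c \<in> cnf f \<Longrightarrow> c \<subseteq> patoms f"
  by (induction f arbitrary: c) auto

lemma peval_split: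
  "peval (\<lambda>a. if P a then x else I a) f \<longleftrightarrow>
   peval (\<lambda>a. if P a then False else I a) f \<or> (x \<and> peval (\<lambda>a. if P a then True else I a) f)"
proof (cases x)
  case True
  have "peval (\<lambda>a. if P a then False else I a) f \<Longrightarrow> peval (\<lambda>a. if P a then True else I a) f"
    by (erule peval_mono) auto
  moreover have "(\<lambda>a. if P a then x else I a) = (\<lambda>a. if P a then True else I a)" using True by simp
  ultimately show ?thesis using True by metis
next
  case False
  then have "(\<lambda>a. if P a then x else I a) = (\<lambda>a. if P a then False else I a)" by simp
  then show ?thesis using False by metis
qed

lemma take_in_nodes:
  assumes "tree_domain r" "x \<in> nodes r" shows "take k x \<in> nodes r"
  using assms(2)
proof (induction x arbitrary: k rule: rev_induct)
  case Nil then show ?case by simp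
next
  case (snoc a x)
  have "x \<in> nodes r" using snoc.prems assms(1) unfolding tree_domain_def by blast
  then show ?case using snoc by (cases "k \<le> length x") auto
qed

lemma children_fin:
  "sigma_tree t \<Longrightarrow> v \<in> nodes t \<Longrightarrow> finite (children t v)"
  unfolding sigma_tree_def by blast

lemma children_nodes: "v' \<in> children t v \<Longrightarrow> v' \<in> nodes t"
  unfolding children_def by blast

lemma card_le0_iff: "finite A \<Longrightarrow> card {x \<in> A. P x} \<le> 0 \<longleftrightarrow> (\<forall>x\<in>A. \<not> P x)"
  by auto

lemma ex_card_sub_iff:
  assumes "finite A"
  shows "(\<exists>S. S \<subseteq> A \<and> finite S \<and> card S = k \<and> S \<subseteq> B) \<longleftrightarrow> k \<le> card {x \<in> A. x \<in> B}"
proof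
  assume "\<exists>S. S \<subseteq> A \<and> finite S \<and> card S = k \<and> S \<subseteq> B"
  then obtain S where "S \<subseteq> A" "card S = k" "S \<subseteq> B" by blast
  then have "S \<subseteq> {x \<in> A. x \<in> B}" by blast
  have "card S \<le> card {x \<in> A. x \<in> B}" using assms \<open>S \<subseteq> {x \<in> A. x \<in> B}\<close> by (intro card_mono) auto
  then show "k \<le> card {x \<in> A. x \<in> B}" using \<open>card S = k\<close> by simp
next
  assume "k \<le> card {x \<in> A. x \<in> B}"
  then obtain S where "S \<subseteq> {x \<in> A. x \<in> B}" "card S = k" "finite S" by (rule obtain_subset_with_card_n)
  then show "\<exists>S. S \<subseteq> A \<and> finite S \<and> card S = k \<and> S \<subseteq> B" by blast
qed

lemma semI_Dia1: "finite (children t v) \<Longrightarrow> semI t G v (Dia 1 q) \<longleftrightarrow> (\<exists>c\<in>children t v. c \<in> G q)"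
proof -
  assume fin: "finite (children t v)"
  have "semI t G v (Dia 1 q) \<longleftrightarrow> 1 \<le> card {x \<in> children t v. x \<in> G q}"
    using ex_card_sub_iff[OF fin] by simp
  also have "\<dots> \<longleftrightarrow> (\<exists>c\<in>children t v. c \<in> G q)"
    using fin by (auto simp: Suc_le_eq card_gt_0_iff)
  finally show ?thesis .
qed

lemma semI_Box1: "finite (children t v) \<Longrightarrow> semI t G v (Box 1 q) \<longleftrightarrow> (\<forall>c\<in>children t v. c \<in> G q)"
proof -
  assume fin: "finite (children t v)"
  have "semI t G v (Box 1 q) \<longleftrightarrow> card {v' \<in> children t v. v' \<notin> G q} = 0" by simp
  also have "\<dots> \<longleftrightarrow> {v' \<in> children t v. v' \<notin> G q} = {}" using fin by simp
  finally show ?thesis by blast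
qed

lemma eventually_const:
  fixes f :: "nat \<Rightarrow> nat"
  assumes "\<And>i. f (Suc i) \<le> f i"
  shows "\<exists>N. \<forall>i\<ge>N. f i = f N"
proof -
  have mono: "i \<le> j \<Longrightarrow> f j \<le> f i" for i j
    by (induction j rule: dec_induct) (auto intro: le_trans assms)
  define m where "m = (LEAST y. \<exists>i. f i = y)"
  have "\<exists>i. f i = m" unfolding m_def by (rule LeastI[of _ "f 0"]) auto
  then obtain N where N: "f N = m" by blast
  have "\<forall>i\<ge>N. f i = f N"
  proof (intro allI impI)
    fix i assume "N \<le> i"
    then have "f i \<le> f N" by (rule mono)
    moreover have "m \<le> f i" unfolding m_def by (rule Least_le) auto
    ultimately show "f i = f N" using N by simp
  qed
  then show ?thesis by blast
qed



definition lin :: "('q, 'ap) hta \<Rightarrow> ('q \<Rightarrow> nat) \<Rightarrow> ('q \<Rightarrow> kind) \<Rightarrow> bool" where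
  "lin A rank kd \<longleftrightarrow>
       inj_on rank (states A) \<and>
       (\<forall>q \<in> states A. \<forall>\<sigma>. \<forall>a \<in> patoms (delta A q \<sigma>). rank (atom_state a) \<le> rank q) \<and>
       (\<forall>q \<in> states A.
          (kd q = Transient \<longrightarrow>
             (\<forall>\<sigma>. \<forall>a \<in> patoms (delta A q \<sigma>). atom_state a \<noteq> q)) \<and>
          (kd q = Existential \<longrightarrow>
             (\<forall>\<sigma>. (\<forall>a \<in> patoms (delta A q \<sigma>). atom_state a = q \<longrightarrow> a = Dia 1 q) \<and>
                  (\<forall>c \<in> dnf (delta A q \<sigma>). card {a \<in> c. atom_state a = q} \<le> 1))
             \<and> q \<notin> acc A) \<and>
          (kd q = Universal \<longrightarrow>
             (\<forall>\<sigma>. (\<forall>a \<in> patoms (delta A q \<sigma>). atom_state a = q \<longrightarrow> a = Box 1 q) \<and>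
                  (\<forall>c \<in> cnf (delta A q \<sigma>). card {a \<in> c. atom_state a = q} \<le> 1))
             \<and> q \<in> acc A))"

lemma linear_hta_lin: "linear_hta A \<longleftrightarrow> hta_wf A \<and> (\<exists>rank kd. lin A rank kd)"
  unfolding linear_hta_def lin_def by blast

lemma wf_atom: "hta_wf A \<Longrightarrow> q \<in> states A \<Longrightarrow> a \<in> patoms (delta A q \<sigma>) \<Longrightarrow> atom_state a \<in> states A \<and> 1 \<le> atom_index a"
  unfolding hta_wf_def by blast

lemma lin_rank_less:
  assumes "hta_wf A" "lin A rank kd" "q \<in> states A" "a \<in> patoms (delta A q \<sigma>)" "atom_state a \<noteq> q"
  shows "rank (atom_state a) < rank q"
proof -
  have "atom_state a \<in> states A" using wf_atom[OF assms(1,3,4)] by blast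
  moreover have "rank (atom_state a) \<le> rank q" using assms unfolding lin_def by blast
  moreover have "inj_on rank (states A)" using assms unfolding lin_def by blast
  ultimately show ?thesis using assms(3,5) by (metis inj_on_def le_neq_implies_less)
qed

lemma run_sound:
  assumes wf: "hta_wf A" and L: "lin A rank kd" and st: "sigma_tree t"
  and F2: "\<And>q v. q \<in> states A \<Longrightarrow> v \<in> nodes t \<Longrightarrow> peval (semI t G v) (delta A q (label t v)) \<Longrightarrow> v \<in> G q"
  and UN: "\<And>q X. q \<in> states A \<Longrightarrow> kd q = Universal \<Longrightarrow> X \<subseteq> nodes t \<Longrightarrow>
            (\<forall>v\<in>X. peval (semI t (G(q := X)) v) (delta A q (label t v))) \<Longrightarrow> X \<subseteq> G q"
  and run: "is_run A t s r" and accr: "accepting A r"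
  and x: "x \<in> nodes r"
  shows "snd (label r x) \<in> G (fst (label r x))"
proof -
  have td: "tree_domain r" using run unfolding is_run_def by blast
  have basic: "\<And>x. x \<in> nodes r \<Longrightarrow> fst (label r x) \<in> states A \<and> snd (label r x) \<in> nodes t \<and>
     peval (atom_holds t r x (snd (label r x))) (delta A (fst (label r x)) (label t (snd (label r x))))"
    using run unfolding is_run_def by blast
  have main: "\<forall>q \<in> states A. rank q = n \<longrightarrow> (\<forall>x\<in>nodes r. fst (label r x) = q \<longrightarrow> snd (label r x) \<in> G q)" for n
  proof (induction n rule: less_induct)
    case (less n)
    show ?case
    proof (rule ballI, rule impI)
      fix q assume q: "q \<in> states A" "rank q = n"
      have IH: "\<And>q' y. q' \<in> states A \<Longrightarrow> rank q' < rank q \<Longrightarrow> y \<in> nodes r \<Longrightarrow> fst (label r y) = q' \<Longrightarrow> snd (label r y) \<in> G q'"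
        using less q by blast
      have lower: "semI t G v a"
        if xr: "x \<in> nodes r" and lx: "label r x = (q, v)" and a: "a \<in> patoms (delta A q (label t v))"
          and aq: "atom_state a \<noteq> q" and ah: "atom_holds t r x v a" for x v a
      proof -
        have rk: "rank (atom_state a) < rank q" using lin_rank_less[OF wf L q(1) a aq] .
        have ast: "atom_state a \<in> states A" using wf_atom[OF wf q(1) a] by blast
        have vt: "v \<in> nodes t" using basic[OF xr] lx by simp
        show ?thesis
        proof (cases a)
          case (Dia k q')
          then obtain S where S: "S \<subseteq> children t v" "finite S" "card S = k"
            "\<forall>v'\<in>S. \<exists>y\<in>children r x. label r y = (q', v')" using ah by auto
          have "S \<subseteq> G q'"
          proof
            fix v' assume "v' \<in> S"
            then obtain y where y: "y \<in> children r x" "label r y = (q', v')" using S by blast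
            have "y \<in> nodes r" using y children_nodes by blast
            then show "v' \<in> G q'" using IH[of q' y] ast rk y Dia by simp
          qed
          then show ?thesis using S Dia by auto
        next
          case (Box k q')
          have sub: "{v' \<in> children t v. v' \<notin> G q'} \<subseteq> {v' \<in> children t v. \<not> (\<exists>y\<in>children r x. label r y = (q', v'))}"
          proof safe
            fix v' y assume "v' \<notin> G q'" "y \<in> children r x" "label r y = (q', v')"
            moreover have "y \<in> nodes r" using \<open>y \<in> children r x\<close> children_nodes by blast
            ultimately show False using IH[of q' y] ast rk Box by simp
          qed
          have fin: "finite (children t v)" using children_fin[OF st vt] .
          have "card {v' \<in> children t v. v' \<notin> G q'} \<le> card {v' \<in> children t v. \<not> (\<exists>y\<in>children r x. label r y = (q', v'))}"
            using fin sub by (intro card_mono) auto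
          then show ?thesis using ah Box by simp
        qed
      qed
      have Lq: "(kd q = Transient \<longrightarrow>
             (\<forall>\<sigma>. \<forall>a \<in> patoms (delta A q \<sigma>). atom_state a \<noteq> q)) \<and>
          (kd q = Existential \<longrightarrow>
             (\<forall>\<sigma>. (\<forall>a \<in> patoms (delta A q \<sigma>). atom_state a = q \<longrightarrow> a = Dia 1 q))
             \<and> q \<notin> acc A) \<and>
          (kd q = Universal \<longrightarrow>
             (\<forall>\<sigma>. (\<forall>a \<in> patoms (delta A q \<sigma>). atom_state a = q \<longrightarrow> a = Box 1 q))
             \<and> q \<in> acc A)" using L q(1) unfolding lin_def by blast
      show "\<forall>x\<in>nodes r. fst (label r x) = q \<longrightarrow> snd (label r x) \<in> G q"
      proof (cases "kd q")
        case Transient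
        show ?thesis
        proof (intro ballI impI)
          fix x assume xr: "x \<in> nodes r" and fq: "fst (label r x) = q"
          obtain v where lx: "label r x = (q, v)" using fq by (metis prod.collapse)
          have "peval (atom_holds t r x v) (delta A q (label t v))" using basic[OF xr] lx by simp
          then have "peval (semI t G v) (delta A q (label t v))"
            by (rule peval_mono) (use lower[OF xr lx] Lq Transient in blast)
          then show "snd (label r x) \<in> G q" using F2[OF q(1)] basic[OF xr] lx by simp
        qed
      next
        case Universal
        define X where "X = {v. \<exists>x\<in>nodes r. label r x = (q, v)}"
        have Xt: "X \<subseteq> nodes t" unfolding X_def using basic by force
        have "\<forall>v\<in>X. peval (semI t (G(q := X)) v) (delta A q (label t v))"
        proof
          fix v assume "v \<in> X"
          then obtain x where xr: "x \<in> nodes r" and lx: "label r x = (q, v)" unfolding X_def by blast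
          have vt: "v \<in> nodes t" using basic[OF xr] lx by simp
          have fin: "finite (children t v)" using children_fin[OF st vt] .
          have "peval (atom_holds t r x v) (delta A q (label t v))" using basic[OF xr] lx by simp
          then show "peval (semI t (G(q := X)) v) (delta A q (label t v))"
          proof (rule peval_mono)
            fix a assume a: "a \<in> patoms (delta A q (label t v))" and ah: "atom_holds t r x v a"
            show "semI t (G(q := X)) v a"
            proof (cases "atom_state a = q")
              case True
              then have aB: "a = Box 1 q" using Lq Universal a by blast
              have "{v' \<in> children t v. \<not> (\<exists>y\<in>children r x. label r y = (q, v'))} = {}"
                using ah aB fin by simp
              then have "\<forall>c\<in>children t v. c \<in> X" unfolding X_def using children_nodes by blast
              then show ?thesis using aB semI_Box1[OF fin, of "G(q := X)" q] by simp
            next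
              case False
              then have "semI t G v a" using lower[OF xr lx a False ah] by blast
              moreover have "semI t (G(q := X)) v a = semI t G v a" by (rule semI_cong) (use False in simp)
              ultimately show ?thesis by simp
            qed
          qed
        qed
        then have "X \<subseteq> G q" using UN[OF q(1) Universal Xt] by blast
        then show ?thesis unfolding X_def by (metis (mono_tags, lifting) mem_Collect_eq prod.collapse subsetD)
      next
        case Existential
        define B where "B = {x \<in> nodes r. fst (label r x) = q \<and> snd (label r x) \<notin> G q}"
        have step: "\<exists>y. y \<in> children r x \<and> y \<in> B" if xB: "x \<in> B" for x
        proof (rule ccontr)
          assume nb: "\<not> (\<exists>y. y \<in> children r x \<and> y \<in> B)"
          have xr: "x \<in> nodes r" using xB B_def by blast
          obtain v where lx: "label r x = (q, v)" using xB B_def by (metis (mono_tags, lifting) mem_Collect_eq prod.collapse)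
          have vt: "v \<in> nodes t" using basic[OF xr] lx by simp
          have "peval (atom_holds t r x v) (delta A q (label t v))" using basic[OF xr] lx by simp
          then have "peval (semI t G v) (delta A q (label t v))"
          proof (rule peval_mono)
            fix a assume a: "a \<in> patoms (delta A q (label t v))" and ah: "atom_holds t r x v a"
            show "semI t G v a"
            proof (cases "atom_state a = q")
              case True
              then have aD: "a = Dia 1 q" using Lq Existential a by blast
              then obtain S where S: "S \<subseteq> children t v" "finite S" "card S = 1"
                "\<forall>v'\<in>S. \<exists>y\<in>children r x. label r y = (q, v')" using ah by auto
              have "S \<subseteq> G q"
              proof
                fix v' assume "v' \<in> S"
                then obtain y where y: "y \<in> children r x" "label r y = (q, v')" using S by blast
                have "y \<in> nodes r" using y children_nodes by blast
                then have "\<not> (fst (label r y) = q \<and> snd (label r y) \<notin> G q)" using nb y unfolding B_def by blast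
                then show "v' \<in> G q" using y by simp
              qed
              then show ?thesis using S aD by auto
            qed (use lower[OF xr lx a _ ah] in blast)
          qed
          then have "v \<in> G q" using F2[OF q(1) vt] by blast
          then show False using xB lx unfolding B_def by simp
        qed
        show ?thesis
        proof (rule ccontr)
          assume "\<not> ?thesis"
          then obtain x0 where x0: "x0 \<in> B" unfolding B_def by blast
          define f where "f = rec_nat x0 (\<lambda>_ y. SOME z. z \<in> children r y \<and> z \<in> B)"
          have f0: "f 0 = x0" unfolding f_def by simp
          have fS: "f (Suc i) = (SOME z. z \<in> children r (f i) \<and> z \<in> B)" for i unfolding f_def by simp
          have fB: "f i \<in> B \<and> f (Suc i) \<in> children r (f i)" for i
          proof (induction i)
            case 0
            then show ?case using someI_ex[OF step[OF x0]] f0 fS x0 by auto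
          next
            case (Suc i)
            then have "f (Suc i) \<in> B" using someI_ex[OF step[of "f i"]] fS by (metis (no_types, lifting))
            then show ?case using someI_ex[OF step[of "f (Suc i)"]] fS[of "Suc i"] by auto
          qed
          define m where "m = length x0"
          define p where "p i = (if i \<le> m then take i x0 else f (i - m))" for i
          have pge: "i \<ge> m \<Longrightarrow> p i = f (i - m)" for i unfolding p_def m_def using f0 by auto
          have x0r: "x0 \<in> nodes r" using x0 B_def by blast
          have p0: "p 0 = []" unfolding p_def by simp
          have pS: "p (Suc i) \<in> children r (p i)" for i
          proof (cases "i < m")
            case True
            then have "p (Suc i) = take i x0 @ [x0 ! i]" "p i = take i x0"
              unfolding p_def m_def by (auto simp: take_Suc_conv_app_nth)
            moreover have "take (Suc i) x0 \<in> nodes r" using take_in_nodes[OF td x0r] .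
            ultimately show ?thesis unfolding children_def using True m_def
              by (auto simp: take_Suc_conv_app_nth)
          next
            case False
            then have "p (Suc i) = f (Suc (i - m))" "p i = f (i - m)" using pge by (auto simp: Suc_diff_le)
            then show ?thesis using fB by simp
          qed
          have "infinite {i. fst (label r (p i)) \<in> acc A}" using accr p0 pS unfolding accepting_def by blast
          moreover have "{i. fst (label r (p i)) \<in> acc A} \<subseteq> {..m}"
          proof
            fix i assume "i \<in> {i. fst (label r (p i)) \<in> acc A}"
            moreover have "i > m \<Longrightarrow> fst (label r (p i)) = q" using pge fB unfolding B_def by simp
            ultimately show "i \<in> {..m}" using Lq Existential by (cases "i > m") auto
          qed
          ultimately show False using finite_subset by blast
        qed
      qed
    qed
  qed
  then show ?thesis using main[of "rank (fst (label r x))"] basic[OF x] x by blast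
qed



lemma run_complete:
  assumes wf: "hta_wf A" and L: "lin A rank kd" and st: "sigma_tree t"
  and F1: "\<And>q v. q \<in> states A \<Longrightarrow> v \<in> nodes t \<Longrightarrow> v \<in> G q \<Longrightarrow> peval (semI t G v) (delta A q (label t v))"
  and EX: "\<And>q. q \<in> states A \<Longrightarrow> kd q = Existential \<Longrightarrow> \<exists>lev::nat list \<Rightarrow> nat. \<forall>v \<in> nodes t. v \<in> G q \<longrightarrow>
              peval (semI t (G(q := {v'. v' \<in> G q \<and> lev v' < lev v})) v) (delta A q (label t v))"
  and root: "[] \<in> G (init A)"
  shows "\<exists>r. is_run A t [] r \<and> accepting A r"
proof -
  have "\<forall>q. \<exists>lev::nat list \<Rightarrow> nat. q \<in> states A \<and> kd q = Existential \<longrightarrow> (\<forall>v \<in> nodes t. v \<in> G q \<longrightarrow>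
              peval (semI t (G(q := {v'. v' \<in> G q \<and> lev v' < lev v})) v) (delta A q (label t v)))"
    using EX by blast
  from choice[OF this] obtain Lv :: "'a \<Rightarrow> nat list \<Rightarrow> nat" where Lv: "\<And>q v. q \<in> states A \<Longrightarrow> kd q = Existential \<Longrightarrow> v \<in> nodes t \<Longrightarrow> v \<in> G q \<Longrightarrow>
              peval (semI t (G(q := {v'. v' \<in> G q \<and> Lv q v' < Lv q v})) v) (delta A q (label t v))"
    by blast
  have "finite (states A)" using wf unfolding hta_wf_def by blast
  then obtain qs where qs: "set qs = states A" using finite_list by blast
  have initA: "init A \<in> states A" using wf unfolding hta_wf_def by blast
  have Lfacts: "inj_on rank (states A)" "\<And>q \<sigma> a. q \<in> states A \<Longrightarrow> a \<in> patoms (delta A q \<sigma>) \<Longrightarrow> rank (atom_state a) \<le> rank q"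
    using L unfolding lin_def by blast+
  define allowed where "allowed q v q' v' \<longleftrightarrow> q' \<in> atom_state ` patoms (delta A q (label t v)) \<and> v' \<in> children t v \<and> v' \<in> G q' \<and>
       (q' = q \<and> kd q = Existential \<longrightarrow> Lv q v' < Lv q v)" for q v q' v'
  define stp where "stp qv j = (qs ! fst (prod_decode j), snd qv @ [snd (prod_decode j)])" for qv :: "'a \<times> nat list" and j
  define ok where "ok qv j \<longleftrightarrow> fst (prod_decode j) < length qs \<and> allowed (fst qv) (snd qv) (fst (stp qv j)) (snd (stp qv j))" for qv j
  define lab where "lab x = foldl stp (init A, []) x" for x
  define N where "N = {x. \<forall>k < length x. ok (lab (take k x)) (x ! k)}"
  define r where "r = \<lparr>nodes = N, label = lab\<rparr>"
  have rN: "nodes r = N" and rl: "label r = lab" unfolding r_def by simp_all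
  have N_snoc: "x @ [j] \<in> N \<longleftrightarrow> x \<in> N \<and> ok (lab x) j" for x j
    unfolding N_def by (auto simp: nth_append less_Suc_eq)
  have N_Nil: "[] \<in> N" unfolding N_def by simp
  have lab_snoc: "lab (x @ [j]) = stp (lab x) j" for x j unfolding lab_def by simp
  have lab_Nil: "lab [] = (init A, [])" unfolding lab_def by simp
  have inv: "fst (lab x) \<in> states A \<and> snd (lab x) \<in> nodes t \<and> snd (lab x) \<in> G (fst (lab x))" if "x \<in> N" for x
    using that
  proof (induction x rule: rev_induct)
    case Nil
    have "[] \<in> nodes t" using st unfolding sigma_tree_def tree_domain_def by blast
    then show ?case using lab_Nil initA root by simp
  next
    case (snoc j x)
    then have xN: "x \<in> N" and okx: "ok (lab x) j" using N_snoc by blast+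
    have qst: "fst (lab x) \<in> states A" using snoc.IH xN by blast
    have al: "allowed (fst (lab x)) (snd (lab x)) (fst (lab (x @ [j]))) (snd (lab (x @ [j])))"
      using okx lab_snoc unfolding ok_def by simp
    then obtain a where a: "a \<in> patoms (delta A (fst (lab x)) (label t (snd (lab x))))" "fst (lab (x @ [j])) = atom_state a"
      unfolding allowed_def by blast
    have "fst (lab (x @ [j])) \<in> states A" using wf_atom[OF wf qst a(1)] a(2) by simp
    then show ?case using al unfolding allowed_def using children_nodes by blast
  qed
  have RC: "\<exists>y\<in>children r x. label r y = (q', v')" if xN: "x \<in> N" and lx: "lab x = (q, v)" and al: "allowed q v q' v'" for x q v q' v'
  proof -
    have qst: "q \<in> states A" using inv[OF xN] lx by simp
    obtain a where a: "a \<in> patoms (delta A q (label t v))" "q' = atom_state a" using al unfolding allowed_def by blast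
    have "q' \<in> set qs" using wf_atom[OF wf qst a(1)] a(2) qs by simp
    then obtain s where s: "s < length qs" "qs ! s = q'" by (metis in_set_conv_nth)
    obtain i where i: "v' = v @ [i]" using al unfolding allowed_def children_def by blast
    define j where "j = prod_encode (s, i)"
    have sj: "stp (q, v) j = (q', v')" unfolding stp_def j_def using s i by simp
    have "ok (q, v) j" unfolding ok_def using sj s al unfolding j_def by simp
    then have "x @ [j] \<in> N" using N_snoc xN lx by simp
    moreover have "label r (x @ [j]) = (q', v')" using rl lab_snoc lx sj by simp
    ultimately show ?thesis unfolding children_def rN by auto
  qed
  have RC': "allowed q v q' v'" if xN: "x \<in> N" and y: "y \<in> children r x" and lx: "lab x = (q, v)" and ly: "label r y = (q', v')" for x y q v q' v'
  proof -
    obtain j where yj: "y = x @ [j]" and yN: "y \<in> N" using y unfolding children_def rN by blast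
    have "ok (lab x) j" using N_snoc yN yj by blast
    moreover have "lab y = stp (lab x) j" using yj lab_snoc by simp
    ultimately show ?thesis unfolding ok_def using lx ly rl by simp
  qed
  have td: "tree_domain r" unfolding tree_domain_def rN using N_Nil N_snoc by blast
  have isrun: "is_run A t [] r"
    unfolding is_run_def
  proof (intro conjI ballI)
    show "tree_domain r" by (rule td)
    show "label r [] = (init A, [])" using rl lab_Nil by simp
    fix x assume "x \<in> nodes r"
    then have xN: "x \<in> N" using rN by simp
    obtain q v where lx: "lab x = (q, v)" by (metis prod.collapse)
    have qst: "q \<in> states A" and vt: "v \<in> nodes t" and vG: "v \<in> G q" using inv[OF xN] lx by auto
    have fin: "finite (children t v)" using children_fin[OF st vt] .
    show "fst (label r x) \<in> states A" "snd (label r x) \<in> nodes t" using qst vt lx rl by auto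
    have ATOM: "atom_holds t r x v a"
      if a: "a \<in> patoms (delta A q (label t v))"
        and alw: "\<forall>v'\<in>children t v. v' \<in> G' (atom_state a) \<longrightarrow> allowed q v (atom_state a) v'"
        and si: "semI t G' v a" for G' a
    proof (cases a)
      case (Dia k q')
      then obtain S where S: "S \<subseteq> children t v" "finite S" "card S = k" "S \<subseteq> G' q'" using si by auto
      have "\<forall>v'\<in>S. \<exists>y\<in>children r x. label r y = (q', v')"
        using S alw Dia RC[OF xN lx] by auto
      then show ?thesis using S Dia by auto
    next
      case (Box k q')
      have sub: "{v' \<in> children t v. \<not> (\<exists>y\<in>children r x. label r y = (q', v'))} \<subseteq> {v' \<in> children t v. v' \<notin> G' q'}"
        using alw Box RC[OF xN lx] by auto
      have "card {v' \<in> children t v. \<not> (\<exists>y\<in>children r x. label r y = (q', v'))} \<le> card {v' \<in> children t v. v' \<notin> G' q'}"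
        using fin sub by (intro card_mono) auto
      then show ?thesis using si Box by simp
    qed
    show "peval (atom_holds t r x (snd (label r x))) (delta A (fst (label r x)) (label t (snd (label r x))))"
    proof (cases "kd q = Existential")
      case True
      let ?G = "G(q := {v'. v' \<in> G q \<and> Lv q v' < Lv q v})"
      have "peval (semI t ?G v) (delta A q (label t v))" using Lv[OF qst True vt vG] .
      then have "peval (atom_holds t r x v) (delta A q (label t v))"
      proof (rule peval_mono)
        fix a assume a: "a \<in> patoms (delta A q (label t v))" and s: "semI t ?G v a"
        show "atom_holds t r x v a"
        proof (rule ATOM[OF a _ s], intro ballI impI)
          fix v' assume "v' \<in> children t v" "v' \<in> ?G (atom_state a)"
          then show "allowed q v (atom_state a) v'" unfolding allowed_def using a
            by (cases "atom_state a = q") auto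
        qed
      qed
      then show ?thesis using lx rl by simp
    next
      case False
      have "peval (semI t G v) (delta A q (label t v))" using F1[OF qst vt vG] .
      then have "peval (atom_holds t r x v) (delta A q (label t v))"
      proof (rule peval_mono)
        fix a assume a: "a \<in> patoms (delta A q (label t v))" and s: "semI t G v a"
        show "atom_holds t r x v a"
        proof (rule ATOM[OF a _ s], intro ballI impI)
          fix v' assume "v' \<in> children t v" "v' \<in> G (atom_state a)"
          then show "allowed q v (atom_state a) v'" unfolding allowed_def using a False by auto
        qed
      qed
      then show ?thesis using lx rl by simp
    qed
  qed
  have accr: "accepting A r"
    unfolding accepting_def
  proof (intro allI impI)
    fix p assume p: "p 0 = [] \<and> (\<forall>i. p (Suc i) \<in> children r (p i))"
    have pN: "p i \<in> N" for i
    proof (induction i)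
      case 0 then show ?case using p N_Nil by simp
    next
      case (Suc i) then show ?case using p children_nodes[of "p (Suc i)" r "p i"] rN by simp
    qed
    define qi where "qi i = fst (lab (p i))" for i
    define vi where "vi i = snd (lab (p i))" for i
    have qist: "qi i \<in> states A" for i using inv[OF pN] qi_def by simp
    have al: "allowed (qi i) (vi i) (qi (Suc i)) (vi (Suc i))" for i
      using RC'[OF pN p[THEN conjunct2, rule_format, of i], of "qi i" "vi i" "qi (Suc i)" "vi (Suc i)"]
      unfolding qi_def vi_def using rl by simp
    have "rank (qi (Suc i)) \<le> rank (qi i)" for i
    proof -
      obtain a where "a \<in> patoms (delta A (qi i) (label t (vi i)))" "qi (Suc i) = atom_state a"
        using al[of i] unfolding allowed_def by blast
      then show ?thesis using Lfacts(2)[OF qist[of i]] by simp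
    qed
    then obtain N0 where N0: "\<forall>i\<ge>N0. rank (qi i) = rank (qi N0)"
      using eventually_const[of "\<lambda>i. rank (qi i)"] by blast
    define q where "q = qi N0"
    have qeq: "\<forall>i\<ge>N0. qi i = q" using N0 Lfacts(1) qist unfolding q_def inj_on_def by blast
    have Lq: "(kd q = Transient \<longrightarrow>
             (\<forall>\<sigma>. \<forall>a \<in> patoms (delta A q \<sigma>). atom_state a \<noteq> q)) \<and>
          (kd q = Existential \<longrightarrow> q \<notin> acc A) \<and>
          (kd q = Universal \<longrightarrow> q \<in> acc A)" using L qist[of N0] unfolding lin_def q_def by blast
    show "infinite {i. fst (label r (p i)) \<in> acc A}"
    proof (cases "kd q")
      case Transient
      have "q \<in> atom_state ` patoms (delta A q (label t (vi N0)))"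
        using al[of N0] qeq unfolding allowed_def by (metis le_Suc_eq order_refl)
      then show ?thesis using Lq Transient by blast
    next
      case Existential
      have dec: "Lv q (vi (Suc i)) < Lv q (vi i)" if "i \<ge> N0" for i
        using al[of i] qeq that Existential unfolding allowed_def by (metis le_Suc_eq)
      have "Lv q (vi (N0 + i)) + i \<le> Lv q (vi N0)" for i
      proof (induction i)
        case 0 then show ?case by simp
      next
        case (Suc i)
        have "Lv q (vi (Suc (N0 + i))) < Lv q (vi (N0 + i))" using dec[of "N0 + i"] by simp
        then show ?case using Suc by simp
      qed
      from this[of "Suc (Lv q (vi N0))"] show ?thesis by simp
    next
      case Universal
      have "\<forall>m. \<exists>n\<ge>m. n \<in> {i. fst (label r (p i)) \<in> acc A}"
      proof
        fix m
        have "qi (max m N0) = q" using qeq by simp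
        then show "\<exists>n\<ge>m. n \<in> {i. fst (label r (p i)) \<in> acc A}"
          using Lq Universal rl unfolding qi_def by (intro exI[of _ "max m N0"]) auto
      qed
      then show ?thesis using infinite_nat_iff_unbounded_le by blast
    qed
  qed
  show ?thesis using isrun accr by blast
qed



lemma run_char:
  assumes wf: "hta_wf A" and L: "lin A rank kd" and st: "sigma_tree t"
  and F1: "\<And>q v. q \<in> states A \<Longrightarrow> v \<in> nodes t \<Longrightarrow> v \<in> G q \<Longrightarrow> peval (semI t G v) (delta A q (label t v))"
  and F2: "\<And>q v. q \<in> states A \<Longrightarrow> v \<in> nodes t \<Longrightarrow> peval (semI t G v) (delta A q (label t v)) \<Longrightarrow> v \<in> G q"
  and EX: "\<And>q. q \<in> states A \<Longrightarrow> kd q = Existential \<Longrightarrow> \<exists>lev::nat list \<Rightarrow> nat. \<forall>v \<in> nodes t. v \<in> G q \<longrightarrow>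
              peval (semI t (G(q := {v'. v' \<in> G q \<and> lev v' < lev v})) v) (delta A q (label t v))"
  and UN: "\<And>q X. q \<in> states A \<Longrightarrow> kd q = Universal \<Longrightarrow> X \<subseteq> nodes t \<Longrightarrow>
            (\<forall>v\<in>X. peval (semI t (G(q := X)) v) (delta A q (label t v))) \<Longrightarrow> X \<subseteq> G q"
  shows "(\<exists>r. is_run A t [] r \<and> accepting A r) \<longleftrightarrow> [] \<in> G (init A)"
proof
  assume "\<exists>r. is_run A t [] r \<and> accepting A r"
  then obtain r where r: "is_run A t [] r" "accepting A r" by blast
  have "[] \<in> nodes r" using r(1) unfolding is_run_def tree_domain_def by blast
  from run_sound[OF wf L st F2 UN r this] show "[] \<in> G (init A)"
    using r(1) unfolding is_run_def by simp
next
  assume "[] \<in> G (init A)"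
  from run_complete[OF wf L st F1 EX this] show "\<exists>r. is_run A t [] r \<and> accepting A r" .
qed

definition euw :: "'ap set ltree \<Rightarrow> 'ap ctl \<Rightarrow> 'ap ctl \<Rightarrow> nat list \<Rightarrow> nat \<Rightarrow> (nat \<Rightarrow> nat list) \<Rightarrow> bool" where
  "euw t a b v j p \<longleftrightarrow> p 0 = v \<and> (\<forall>k<j. p (Suc k) \<in> children t (p k))
        \<and> ctl_sat t (p j) b \<and> (\<forall>k<j. ctl_sat t (p k) a)"

lemma sat_EU: "ctl_sat t v (EUn a b) \<longleftrightarrow> (\<exists>j p. euw t a b v j p)"
  unfolding euw_def by simp

lemma euw_shift: "euw t a b v (Suc j) p \<Longrightarrow> euw t a b (p 1) j (\<lambda>k. p (Suc k))"
  unfolding euw_def by auto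

lemma euw_Suc: "euw t a b v (Suc j) p \<Longrightarrow> ctl_sat t v a \<and> p 1 \<in> children t v"
  unfolding euw_def by auto

lemma euw_cons: "euw t a b c j p \<Longrightarrow> c \<in> children t v \<Longrightarrow> ctl_sat t v a \<Longrightarrow>
   euw t a b v (Suc j) (\<lambda>k. if k = 0 then v else p (k - 1))"
  unfolding euw_def by (auto simp: less_Suc_eq_0_disj)

lemma EU_unfold: "ctl_sat t v (EUn a b) \<longleftrightarrow> ctl_sat t v b \<or> (ctl_sat t v a \<and> (\<exists>c\<in>children t v. ctl_sat t c (EUn a b)))"
proof
  assume "ctl_sat t v (EUn a b)"
  then obtain j p where w: "euw t a b v j p" using sat_EU by blast
  show "ctl_sat t v b \<or> (ctl_sat t v a \<and> (\<exists>c\<in>children t v. ctl_sat t c (EUn a b)))"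
  proof (cases j)
    case 0 then show ?thesis using w unfolding euw_def by auto
  next
    case (Suc j')
    then show ?thesis using euw_shift[of t a b v j' p] euw_Suc[of t a b v j' p] w sat_EU by blast
  qed
next
  assume "ctl_sat t v b \<or> (ctl_sat t v a \<and> (\<exists>c\<in>children t v. ctl_sat t c (EUn a b)))"
  then show "ctl_sat t v (EUn a b)"
  proof
    assume "ctl_sat t v b"
    then have "euw t a b v 0 (\<lambda>_. v)" unfolding euw_def by simp
    then show ?thesis using sat_EU by blast
  next
    assume "ctl_sat t v a \<and> (\<exists>c\<in>children t v. ctl_sat t c (EUn a b))"
    then obtain c j p where "ctl_sat t v a" "c \<in> children t v" "euw t a b c j p" using sat_EU by blast
    then show ?thesis using euw_cons sat_EU by blast
  qed
qed

definition TT :: "'ap ctl" where "TT = Dn 0 (Prop undefined)"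
definition cAnd :: "'ap ctl \<Rightarrow> 'ap ctl \<Rightarrow> 'ap ctl" where "cAnd a b = Neg (Or (Neg a) (Neg b))"

lemma sat_TT[simp]: "ctl_sat t v TT" unfolding TT_def by simp
lemma sat_cAnd[simp]: "ctl_sat t v (cAnd a b) \<longleftrightarrow> ctl_sat t v a \<and> ctl_sat t v b" unfolding cAnd_def by simp

fun bigor :: "'ap ctl list \<Rightarrow> 'ap ctl" where
  "bigor [] = Neg TT" | "bigor (x # xs) = Or x (bigor xs)"
fun bigand :: "'ap ctl list \<Rightarrow> 'ap ctl" where
  "bigand [] = TT" | "bigand (x # xs) = cAnd x (bigand xs)"

lemma sat_bigor: "ctl_sat t v (bigor xs) \<longleftrightarrow> (\<exists>x\<in>set xs. ctl_sat t v x)"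
  by (induction xs) auto
lemma sat_bigand: "ctl_sat t v (bigand xs) \<longleftrightarrow> (\<forall>x\<in>set xs. ctl_sat t v x)"
  by (induction xs) auto

definition labeq :: "'ap::finite set \<Rightarrow> 'ap ctl" where
  "labeq \<sigma> = bigand (map (\<lambda>p. if p \<in> \<sigma> then Prop p else Neg (Prop p)) (SOME xs. set xs = (UNIV :: 'ap set)))"

lemma sat_labeq: fixes \<sigma> :: "'ap::finite set" shows "ctl_sat t v (labeq \<sigma>) \<longleftrightarrow> label t v = \<sigma>"
proof -
  have s: "set (SOME xs. set xs = (UNIV :: 'ap set)) = UNIV"
    by (rule someI_ex) (use finite_list[OF finite_UNIV[where 'a='ap]] in blast)
  define f where "f p = (if p \<in> \<sigma> then Prop p else Neg (Prop p))" for p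
  have eq: "set (map f (SOME xs. set xs = (UNIV :: 'ap set))) = range f" using s by simp
  have "ctl_sat t v (labeq \<sigma>) \<longleftrightarrow> (\<forall>x\<in>range f. ctl_sat t v x)"
    unfolding labeq_def sat_bigand f_def[symmetric] eq ..
  also have "\<dots> \<longleftrightarrow> (\<forall>p. ctl_sat t v (if p \<in> \<sigma> then Prop p else Neg (Prop p)))" unfolding f_def by blast
  also have "\<dots> \<longleftrightarrow> (\<forall>p. p \<in> \<sigma> \<longleftrightarrow> p \<in> label t v)" by (metis ctl_sat.simps(1,2))
  also have "\<dots> \<longleftrightarrow> label t v = \<sigma>" by blast
  finally show ?thesis .
qed

definition bigsel :: "('ap::finite set \<Rightarrow> 'ap ctl) \<Rightarrow> 'ap ctl" where
  "bigsel F = bigor (map (\<lambda>\<sigma>. cAnd (labeq \<sigma>) (F \<sigma>)) (SOME xs. set xs = (UNIV :: 'ap set set)))"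

lemma sat_bigsel: fixes F :: "'ap::finite set \<Rightarrow> 'ap ctl" shows "ctl_sat t v (bigsel F) \<longleftrightarrow> ctl_sat t v (F (label t v))"
proof -
  have s: "set (SOME xs. set xs = (UNIV :: 'ap set set)) = UNIV"
    by (rule someI_ex) (use finite_list[OF finite_UNIV[where 'a="'ap set"]] in blast)
  show ?thesis unfolding bigsel_def sat_bigor using s by (auto simp: sat_labeq)
qed

lemma bigsel_cong: assumes "\<And>\<sigma>. F \<sigma> = F' \<sigma>" shows "bigsel F = bigsel F'"
proof -
  have "F = F'" by (rule ext) (rule assms)
  then show ?thesis by simp
qed



fun atr :: "('q \<Rightarrow> 'ap ctl) \<Rightarrow> 'q atom \<Rightarrow> 'ap ctl" where
  "atr M (Dia k q') = Dn k (M q')"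
| "atr M (Box k q') = Neg (Dn k (Neg (M q')))"

primrec tr :: "('q \<Rightarrow> 'ap ctl) \<Rightarrow> 'q \<Rightarrow> bool \<Rightarrow> 'q atom pbf \<Rightarrow> 'ap ctl" where
  "tr M q b PTrue = TT"
| "tr M q b PFalse = Neg TT"
| "tr M q b (PAtom a) = (if atom_state a = q then (if b then TT else Neg TT) else atr M a)"
| "tr M q b (PAnd f g) = cAnd (tr M q b f) (tr M q b g)"
| "tr M q b (POr f g) = Or (tr M q b f) (tr M q b g)"

lemma sat_atr:
  assumes fin: "finite (children t v)" and k: "1 \<le> atom_index a"
  shows "ctl_sat t v (atr M a) \<longleftrightarrow> semI t (\<lambda>q'. {u. ctl_sat t u (M q')}) v a"
proof (cases a)
  case (Dia k q')
  then show ?thesis using ex_card_sub_iff[OF fin, of k "{u. ctl_sat t u (M q')}"] by simp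
next
  case (Box k q')
  then show ?thesis using k by auto
qed

lemma sat_tr:
  assumes fin: "finite (children t v)" and k: "\<forall>a\<in>patoms f. 1 \<le> atom_index a"
  shows "ctl_sat t v (tr M q b f) \<longleftrightarrow> peval (\<lambda>a. if atom_state a = q then b else semI t (\<lambda>q'. {u. ctl_sat t u (M q')}) v a) f"
  using k by (induction f) (auto simp: sat_atr[OF fin])

lemma atr_cong: "M (atom_state a) = M' (atom_state a) \<Longrightarrow> atr M a = atr M' a"
  by (cases a) auto

lemma tr_cong: "(\<forall>a\<in>patoms f. atom_state a \<noteq> q \<longrightarrow> M (atom_state a) = M' (atom_state a)) \<Longrightarrow> tr M q b f = tr M' q b f"
  by (induction f) (auto intro: atr_cong)

definition psi :: "('q, 'ap::finite) hta \<Rightarrow> ('q \<Rightarrow> 'ap ctl) \<Rightarrow> 'q \<Rightarrow> bool \<Rightarrow> 'ap ctl" where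
  "psi A M q b = bigsel (\<lambda>\<sigma>. tr M q b (delta A q \<sigma>))"

definition build :: "('q, 'ap::finite) hta \<Rightarrow> ('q \<Rightarrow> kind) \<Rightarrow> ('q \<Rightarrow> 'ap ctl) \<Rightarrow> 'q \<Rightarrow> 'ap ctl" where
  "build A kd M q = (if q \<in> states A then
     (case kd q of Transient \<Rightarrow> psi A M q False
      | Existential \<Rightarrow> EUn (psi A M q True) (psi A M q False)
      | Universal \<Rightarrow> Neg (EUn (Neg (psi A M q False)) (cAnd (Neg (psi A M q False)) (Neg (psi A M q True)))))
    else TT)"

lemma dir1:
  fixes A :: "('q, 'ap::finite) hta"
  assumes wf: "hta_wf A" and L: "lin A rank kd"
  shows "\<exists>\<phi>. hta_lang A = ctl_lang \<phi>"
proof -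
  define R where "R = {(q', q). q' \<in> states A \<and> q \<in> states A \<and> rank q' < rank q}"
  have wfR: "wf R"
    by (rule wf_subset[OF wf_inv_image[OF wf_less_than, of rank]]) (auto simp: R_def inv_image_def)
  have adm: "adm_wf R (build A kd)"
    unfolding adm_wf_def
  proof (intro allI impI)
    fix f g :: "'q \<Rightarrow> 'ap ctl" and x
    assume H: "\<forall>z. (z, x) \<in> R \<longrightarrow> f z = g z"
    show "build A kd f x = build A kd g x"
    proof (cases "x \<in> states A")
      case True
      have "psi A f x b = psi A g x b" for b
        unfolding psi_def
      proof (rule bigsel_cong, rule tr_cong, intro ballI impI)
        fix \<sigma> a assume a: "a \<in> patoms (delta A x \<sigma>)" and ne: "atom_state a \<noteq> x"
        have "(atom_state a, x) \<in> R" unfolding R_def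
          using lin_rank_less[OF wf L True a ne] wf_atom[OF wf True a] True by simp
        then show "f (atom_state a) = g (atom_state a)" using H by blast
      qed
      then have "psi A f x True = psi A g x True" "psi A f x False = psi A g x False" by blast+
      then show ?thesis unfolding build_def by (simp split: kind.split)
    next
      case False
      then show ?thesis unfolding build_def by simp
    qed
  qed
  define \<Phi> where "\<Phi> = wfrec R (build A kd)"
  have \<Phi>eq: "\<Phi> q = build A kd \<Phi> q" for q
    using wfrec_fixpoint[OF wfR adm] unfolding \<Phi>_def by metis
  have key: "(\<exists>r. is_run A t [] r \<and> accepting A r) \<longleftrightarrow> ctl_sat t [] (\<Phi> (init A))" if st: "sigma_tree t" for t
  proof -
    define G where "G = (\<lambda>q. {v. ctl_sat t v (\<Phi> q)})"
    have fin: "\<And>v. v \<in> nodes t \<Longrightarrow> finite (children t v)" using children_fin[OF st] .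
    have psi_sem: "ctl_sat t v (psi A \<Phi> q b) \<longleftrightarrow> peval (\<lambda>a. if atom_state a = q then b else semI t G v a) (delta A q (label t v))"
      if q: "q \<in> states A" and v: "v \<in> nodes t" for q v b
      unfolding psi_def sat_bigsel G_def
      by (rule sat_tr[OF fin[OF v]]) (use wf_atom[OF wf q] in blast)
    have selfsplit: "peval (semI t G' v) (delta A q (label t v)) \<longleftrightarrow>
        ctl_sat t v (psi A \<Phi> q False) \<or> (semI t G' v s \<and> ctl_sat t v (psi A \<Phi> q True))"
      if q: "q \<in> states A" and v: "v \<in> nodes t" and s: "\<forall>\<sigma>. \<forall>a\<in>patoms (delta A q \<sigma>). atom_state a = q \<longrightarrow> a = s"
        and G': "\<forall>q''. q'' \<noteq> q \<longrightarrow> G' q'' = G q''" for q v s G'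
    proof -
      have "peval (semI t G' v) (delta A q (label t v)) = peval (\<lambda>a. if atom_state a = q then semI t G' v s else semI t G v a) (delta A q (label t v))"
      proof (rule peval_cong)
        fix a assume a: "a \<in> patoms (delta A q (label t v))"
        show "semI t G' v a = (if atom_state a = q then semI t G' v s else semI t G v a)"
        proof (cases "atom_state a = q")
          case True then show ?thesis using s a by auto
        next
          case False
          then have "semI t G' v a = semI t G v a" using G' by (intro semI_cong) simp
          then show ?thesis using False by simp
        qed
      qed
      also have "\<dots> = (peval (\<lambda>a. if atom_state a = q then False else semI t G v a) (delta A q (label t v)) \<or>
          (semI t G' v s \<and> peval (\<lambda>a. if atom_state a = q then True else semI t G v a) (delta A q (label t v))))"
        by (rule peval_split)
      finally show ?thesis unfolding psi_sem[OF q v] .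
    qed
    have sFT: "ctl_sat t v (psi A \<Phi> q False) \<Longrightarrow> ctl_sat t v (psi A \<Phi> q True)" if q: "q \<in> states A" and v: "v \<in> nodes t" for q v
      unfolding psi_sem[OF q v] by (erule peval_mono) auto
    have Lq: "(kd q = Transient \<longrightarrow>
             (\<forall>\<sigma>. \<forall>a \<in> patoms (delta A q \<sigma>). atom_state a \<noteq> q)) \<and>
          (kd q = Existential \<longrightarrow>
             (\<forall>\<sigma>. \<forall>a \<in> patoms (delta A q \<sigma>). atom_state a = q \<longrightarrow> a = Dia 1 q)) \<and>
          (kd q = Universal \<longrightarrow>
             (\<forall>\<sigma>. \<forall>a \<in> patoms (delta A q \<sigma>). atom_state a = q \<longrightarrow> a = Box 1 q))" if "q \<in> states A" for q
      using L that unfolding lin_def by blast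
    have F: "v \<in> G q \<longleftrightarrow> peval (semI t G v) (delta A q (label t v))" if q: "q \<in> states A" and v: "v \<in> nodes t" for q v
    proof (cases "kd q")
      case Transient
      have "peval (semI t G v) (delta A q (label t v)) = peval (\<lambda>a. if atom_state a = q then False else semI t G v a) (delta A q (label t v))"
        by (rule peval_cong) (use Lq[OF q] Transient in auto)
      moreover have "\<Phi> q = psi A \<Phi> q False" using \<Phi>eq[of q] q Transient unfolding build_def by simp
      ultimately show ?thesis using psi_sem[OF q v] unfolding G_def by simp
    next
      case Existential
      have "peval (semI t G v) (delta A q (label t v)) \<longleftrightarrow>
        ctl_sat t v (psi A \<Phi> q False) \<or> (semI t G v (Dia 1 q) \<and> ctl_sat t v (psi A \<Phi> q True))"
        by (rule selfsplit[OF q v]) (use Lq[OF q] Existential in auto)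
      moreover have "semI t G v (Dia 1 q) \<longleftrightarrow> (\<exists>c\<in>children t v. c \<in> G q)" using semI_Dia1[OF fin[OF v]] .
      moreover have "\<Phi> q = EUn (psi A \<Phi> q True) (psi A \<Phi> q False)" using \<Phi>eq[of q] q Existential unfolding build_def by simp
      moreover have "\<And>u. u \<in> G q \<longleftrightarrow> ctl_sat t u (EUn (psi A \<Phi> q True) (psi A \<Phi> q False))"
        using calculation(3) unfolding G_def by (simp del: ctl_sat.simps)
      ultimately show ?thesis using EU_unfold[of t v "psi A \<Phi> q True" "psi A \<Phi> q False"] by blast
    next
      case Universal
      have "peval (semI t G v) (delta A q (label t v)) \<longleftrightarrow>
        ctl_sat t v (psi A \<Phi> q False) \<or> (semI t G v (Box 1 q) \<and> ctl_sat t v (psi A \<Phi> q True))"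
        by (rule selfsplit[OF q v]) (use Lq[OF q] Universal in auto)
      moreover have "semI t G v (Box 1 q) \<longleftrightarrow> (\<forall>c\<in>children t v. c \<in> G q)" using semI_Box1[OF fin[OF v]] .
      moreover have "\<Phi> q = Neg (EUn (Neg (psi A \<Phi> q False)) (cAnd (Neg (psi A \<Phi> q False)) (Neg (psi A \<Phi> q True))))"
        using \<Phi>eq[of q] q Universal unfolding build_def by simp
      moreover have "\<And>u. u \<in> G q \<longleftrightarrow> \<not> ctl_sat t u (EUn (Neg (psi A \<Phi> q False)) (cAnd (Neg (psi A \<Phi> q False)) (Neg (psi A \<Phi> q True))))"
        using calculation(3) unfolding G_def by simp
      moreover have "ctl_sat t v (EUn (Neg (psi A \<Phi> q False)) (cAnd (Neg (psi A \<Phi> q False)) (Neg (psi A \<Phi> q True)))) \<longleftrightarrow>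
         (\<not> ctl_sat t v (psi A \<Phi> q False) \<and> \<not> ctl_sat t v (psi A \<Phi> q True)) \<or>
         (\<not> ctl_sat t v (psi A \<Phi> q False) \<and> (\<exists>c\<in>children t v. ctl_sat t c (EUn (Neg (psi A \<Phi> q False)) (cAnd (Neg (psi A \<Phi> q False)) (Neg (psi A \<Phi> q True))))))"
        by (subst EU_unfold) (simp del: ctl_sat.simps(6))
      ultimately show ?thesis using sFT[OF q v] by blast
    qed
    have EX: "\<exists>lev::nat list \<Rightarrow> nat. \<forall>v \<in> nodes t. v \<in> G q \<longrightarrow>
              peval (semI t (G(q := {v'. v' \<in> G q \<and> lev v' < lev v})) v) (delta A q (label t v))"
      if q: "q \<in> states A" and E: "kd q = Existential" for q
    proof -
      let ?T = "psi A \<Phi> q True" and ?F = "psi A \<Phi> q False"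
      have \<Phi>q: "\<Phi> q = EUn ?T ?F" using \<Phi>eq[of q] q E unfolding build_def by simp
      define lev where "lev v = (LEAST j. \<exists>p. euw t ?T ?F v j p)" for v
      have "peval (semI t (G(q := {v'. v' \<in> G q \<and> lev v' < lev v})) v) (delta A q (label t v))"
        if v: "v \<in> nodes t" and vG: "v \<in> G q" for v
      proof -
        let ?G' = "G(q := {v'. v' \<in> G q \<and> lev v' < lev v})"
        have ss: "peval (semI t ?G' v) (delta A q (label t v)) \<longleftrightarrow>
          ctl_sat t v ?F \<or> (semI t ?G' v (Dia 1 q) \<and> ctl_sat t v ?T)"
          by (rule selfsplit[OF q v]) (use Lq[OF q] E in auto)
        have d1: "semI t ?G' v (Dia 1 q) \<longleftrightarrow> (\<exists>c\<in>children t v. c \<in> G q \<and> lev c < lev v)"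
          using semI_Dia1[OF fin[OF v], of ?G' q] by simp
        have "ctl_sat t v (EUn ?T ?F)" using vG \<Phi>q unfolding G_def by (simp del: ctl_sat.simps)
        then have "\<exists>j p. euw t ?T ?F v j p" using sat_EU by blast
        then have "\<exists>p. euw t ?T ?F v (lev v) p" unfolding lev_def by (rule LeastI_ex)
        then obtain p where p: "euw t ?T ?F v (lev v) p" by blast
        show ?thesis
        proof (cases "lev v")
          case 0
          then have "ctl_sat t v ?F" using p unfolding euw_def by auto
          then show ?thesis using ss by blast
        next
          case (Suc j)
          have w1: "euw t ?T ?F (p 1) j (\<lambda>k. p (Suc k))" using euw_shift p Suc by metis
          have s1: "ctl_sat t v ?T \<and> p 1 \<in> children t v" using euw_Suc p Suc by metis
          have "ctl_sat t (p 1) (EUn ?T ?F)" using w1 sat_EU by blast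
          then have "p 1 \<in> G q" using \<Phi>q unfolding G_def by (simp del: ctl_sat.simps)
          moreover have "lev (p 1) \<le> j" unfolding lev_def by (rule Least_le) (use w1 in blast)
          ultimately have "\<exists>c\<in>children t v. c \<in> G q \<and> lev c < lev v" using s1 Suc by (intro bexI[of _ "p 1"]) auto
          then show ?thesis using ss d1 s1 by blast
        qed
      qed
      then show ?thesis by blast
    qed
    have UN: "X \<subseteq> G q"
      if q: "q \<in> states A" and U: "kd q = Universal" and X: "X \<subseteq> nodes t"
        and H: "\<forall>v\<in>X. peval (semI t (G(q := X)) v) (delta A q (label t v))" for q X
    proof
      fix v assume vX: "v \<in> X"
      let ?T = "psi A \<Phi> q True" and ?F = "psi A \<Phi> q False"
      have \<Phi>q: "\<Phi> q = Neg (EUn (Neg ?F) (cAnd (Neg ?F) (Neg ?T)))" using \<Phi>eq[of q] q U unfolding build_def by simp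
      have HX: "ctl_sat t u ?F \<or> ((\<forall>c\<in>children t u. c \<in> X) \<and> ctl_sat t u ?T)" if uX: "u \<in> X" for u
      proof -
        have u: "u \<in> nodes t" using uX X by blast
        have "peval (semI t (G(q := X)) u) (delta A q (label t u)) \<longleftrightarrow>
          ctl_sat t u ?F \<or> (semI t (G(q := X)) u (Box 1 q) \<and> ctl_sat t u ?T)"
          by (rule selfsplit[OF q u]) (use Lq[OF q] U in auto)
        moreover have "semI t (G(q := X)) u (Box 1 q) \<longleftrightarrow> (\<forall>c\<in>children t u. c \<in> X)"
          using semI_Box1[OF fin[OF u], of "G(q := X)" q] by simp
        ultimately show ?thesis using H uX by blast
      qed
      show "v \<in> G q"
      proof (rule ccontr)
        assume "v \<notin> G q"
        then have "ctl_sat t v (EUn (Neg ?F) (cAnd (Neg ?F) (Neg ?T)))" using \<Phi>q unfolding G_def by (simp del: ctl_sat.simps(6))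
        then obtain j p where p: "euw t (Neg ?F) (cAnd (Neg ?F) (Neg ?T)) v j p"
          using sat_EU by blast
        have "k \<le> j \<longrightarrow> p k \<in> X" for k
        proof (induction k)
          case 0 then show ?case using p vX unfolding euw_def by simp
        next
          case (Suc k)
          show ?case
          proof
            assume kj: "Suc k \<le> j"
            then have pk: "p k \<in> X" using Suc by simp
            have "\<not> ctl_sat t (p k) ?F" using p kj unfolding euw_def by auto
            then have "\<forall>c\<in>children t (p k). c \<in> X" using HX[OF pk] by blast
            moreover have "p (Suc k) \<in> children t (p k)" using p kj unfolding euw_def by auto
            ultimately show "p (Suc k) \<in> X" by blast
          qed
        qed
        then have "p j \<in> X" by simp
        moreover have "\<not> ctl_sat t (p j) ?F \<and> \<not> ctl_sat t (p j) ?T" using p unfolding euw_def by simp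
        ultimately show False using HX by blast
      qed
    qed
    have "(\<exists>r. is_run A t [] r \<and> accepting A r) \<longleftrightarrow> [] \<in> G (init A)"
      by (rule run_char[OF wf L st]) (use F EX UN in blast)+
    then show ?thesis unfolding G_def by simp
  qed
  have "hta_lang A = ctl_lang (\<Phi> (init A))"
    unfolding hta_lang_def ctl_lang_def using key by blast
  then show ?thesis by blast
qed



instance ctl :: (countable) countable
  by countable_datatype

primrec subf :: "'ap ctl \<Rightarrow> 'ap ctl set" where
  "subf (Prop p) = {Prop p}"
| "subf (Neg a) = insert (Neg a) (subf a)"
| "subf (Or a b) = insert (Or a b) (subf a \<union> subf b)"
| "subf (Dn n a) = insert (Dn n a) (subf a)"
| "subf (EXn a) = insert (EXn a) (subf a)"
| "subf (EUn a b) = insert (EUn a b) (subf a \<union> subf b)"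

lemma subf_finite: "finite (subf \<phi>)" by (induction \<phi>) auto
lemma subf_refl: "\<phi> \<in> subf \<phi>" by (cases \<phi>) auto
lemma subf_trans: "\<psi> \<in> subf \<phi> \<Longrightarrow> subf \<psi> \<subseteq> subf \<phi>" by (induction \<phi>) auto
lemma subf_size: "\<psi> \<in> subf \<phi> \<Longrightarrow> size \<psi> \<le> size \<phi>" by (induction \<phi>) auto

definition enc :: "'ap::countable ctl \<Rightarrow> bool \<Rightarrow> nat" where "enc \<psi> b = to_nat (\<psi>, b)"
definition dec :: "nat \<Rightarrow> 'ap::countable ctl \<times> bool" where "dec c = from_nat c"

lemma dec_enc[simp]: "dec (enc \<psi> b) = (\<psi>, b)" unfolding enc_def dec_def by simp
lemma enc_inj[simp]: "enc \<psi> b = enc \<psi>' b' \<longleftrightarrow> \<psi> = \<psi>' \<and> b = b'"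
  unfolding enc_def by simp

primrec dl :: "'ap::countable ctl \<Rightarrow> bool \<Rightarrow> 'ap set \<Rightarrow> nat atom pbf" where
  "dl (Prop p) b \<sigma> = (if (p \<in> \<sigma>) = b then PTrue else PFalse)"
| "dl (Neg a) b \<sigma> = dl a (\<not> b) \<sigma>"
| "dl (Or a c) b \<sigma> = (if b then POr (dl a b \<sigma>) (dl c b \<sigma>) else PAnd (dl a b \<sigma>) (dl c b \<sigma>))"
| "dl (Dn n a) b \<sigma> = (if n = 0 then (if b then PTrue else PFalse)
      else if b then PAtom (Dia n (enc a True)) else PAtom (Box n (enc a False)))"
| "dl (EXn a) b \<sigma> = (if b then PAtom (Dia 1 (enc a True)) else PAtom (Box 1 (enc a False)))"
| "dl (EUn a c) b \<sigma> = (if b then POr (dl c True \<sigma>) (PAnd (dl a True \<sigma>) (PAtom (Dia 1 (enc (EUn a c) True))))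
      else PAnd (dl c False \<sigma>) (POr (dl a False \<sigma>) (PAtom (Box 1 (enc (EUn a c) False)))))"

lemma dl_atoms_sub:
  "a \<in> patoms (dl \<psi> b \<sigma>) \<Longrightarrow> \<exists>\<psi>' b'. atom_state a = enc \<psi>' b' \<and> \<psi>' \<in> subf \<psi> \<and> 1 \<le> atom_index a"
proof (induction \<psi> arbitrary: b)
  case (Prop p) then show ?case by (simp split: if_splits)
next
  case (Neg x)
  have "a \<in> patoms (dl x (\<not> b) \<sigma>)" using Neg.prems by simp
  from Neg.IH[OF this] obtain \<psi>' b' where "atom_state a = enc \<psi>' b'" "\<psi>' \<in> subf x" "1 \<le> atom_index a" by blast
  then show ?case by auto
next
  case (Or x y)
  have "a \<in> patoms (dl x b \<sigma>) \<or> a \<in> patoms (dl y b \<sigma>)" using Or.prems by (cases b) auto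
  then obtain \<psi>' b' where "atom_state a = enc \<psi>' b'" "\<psi>' \<in> subf x \<or> \<psi>' \<in> subf y" "1 \<le> atom_index a"
    using Or.IH by blast
  then show ?case by auto
next
  case (Dn n x)
  then have "a = Dia n (enc x True) \<or> a = Box n (enc x False)" "n \<noteq> 0" by (auto split: if_splits)
  then show ?case using subf_refl[of x] by auto
next
  case (EXn x)
  then have "a = Dia 1 (enc x True) \<or> a = Box 1 (enc x False)" by (auto split: if_splits)
  then show ?case using subf_refl[of x] by auto
next
  case (EUn x y)
  have "a \<in> patoms (dl x b \<sigma>) \<or> a \<in> patoms (dl y b \<sigma>) \<or> a = Dia 1 (enc (EUn x y) True) \<or> a = Box 1 (enc (EUn x y) False)"
    using EUn.prems by (cases b) auto
  then show ?case
  proof (elim disjE)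
    assume "a \<in> patoms (dl x b \<sigma>)"
    then obtain \<psi>' b' where "atom_state a = enc \<psi>' b'" "\<psi>' \<in> subf x" "1 \<le> atom_index a" using EUn.IH by blast
    then show ?case by auto
  next
    assume "a \<in> patoms (dl y b \<sigma>)"
    then obtain \<psi>' b' where "atom_state a = enc \<psi>' b'" "\<psi>' \<in> subf y" "1 \<le> atom_index a" using EUn.IH by blast
    then show ?case by auto
  qed auto
qed

lemma dl_atoms_ne:
  fixes \<psi> \<chi> :: "'ap::countable ctl"
  assumes "a \<in> patoms (dl \<psi> b \<sigma>)" "size \<psi> < size \<chi>" shows "atom_state a \<noteq> enc \<chi> b'"
proof -
  obtain \<psi>' b'' where e: "atom_state a = enc \<psi>' b''" and sf: "\<psi>' \<in> subf \<psi>" using dl_atoms_sub[OF assms(1)] by blast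
  have sz: "size \<psi>' \<le> size \<psi>" using subf_size sf by blast
  show ?thesis
  proof
    assume "atom_state a = enc \<chi> b'"
    then have "enc \<psi>' b'' = enc \<chi> b'" using e by simp
    then have "\<psi>' = \<chi>" by (simp only: enc_inj)
    then show False using sz assms(2) by simp
  qed
qed

lemma dl_self:
  fixes \<psi> :: "'ap::countable ctl"
  assumes a: "a \<in> patoms (dl \<psi> b \<sigma>)" and s: "atom_state a = enc \<psi> b'"
  shows "b' = b \<and> (\<exists>x y. \<psi> = EUn x y) \<and> a = (if b then Dia 1 (enc \<psi> b) else Box 1 (enc \<psi> b))"
proof (cases \<psi>)
  case (Prop p) then show ?thesis using a by (simp split: if_splits)
next
  case (Neg x)
  have "a \<in> patoms (dl x (\<not> b) \<sigma>)" using a Neg by simp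
  from dl_atoms_ne[OF this, of \<psi> b'] s Neg show ?thesis by simp
next
  case (Or x y)
  have "a \<in> patoms (dl x b \<sigma>) \<or> a \<in> patoms (dl y b \<sigma>)" using a Or by (cases b) auto
  then show ?thesis using dl_atoms_ne[of a x b \<sigma> \<psi> b'] dl_atoms_ne[of a y b \<sigma> \<psi> b'] s Or by auto
next
  case (Dn n x)
  then have "a = Dia n (enc x True) \<or> a = Box n (enc x False)" using a by (auto split: if_splits)
  then show ?thesis using s Dn by auto
next
  case (EXn x)
  then have "a = Dia 1 (enc x True) \<or> a = Box 1 (enc x False)" using a by (auto split: if_splits)
  then show ?thesis using s EXn by auto
next
  case (EUn x y)
  have "a \<in> patoms (dl x b \<sigma>) \<or> a \<in> patoms (dl y b \<sigma>) \<or> a = (if b then Dia 1 (enc \<psi> b) else Box 1 (enc \<psi> b))"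
    using a EUn by (cases b) auto
  moreover have "a \<notin> patoms (dl x b \<sigma>)" using dl_atoms_ne[of a x b \<sigma> \<psi> b'] s EUn by auto
  moreover have "a \<notin> patoms (dl y b \<sigma>)" using dl_atoms_ne[of a y b \<sigma> \<psi> b'] s EUn by auto
  ultimately have "a = (if b then Dia 1 (enc \<psi> b) else Box 1 (enc \<psi> b))" by blast
  then show ?thesis using s EUn by (cases b) auto
qed



lemma subf_size_strict: "\<psi>' \<in> subf \<psi> \<Longrightarrow> \<psi>' \<noteq> \<psi> \<Longrightarrow> size \<psi>' < size \<psi>"
  by (cases \<psi>) (auto dest!: subf_size)

lemma dl_sem:
  fixes \<psi> :: "'ap::countable ctl"
  assumes fin: "finite (children t v)"
  shows "peval (semI t (\<lambda>c. {u. ctl_sat t u (fst (dec c :: 'ap ctl \<times> bool)) = snd (dec c :: 'ap ctl \<times> bool)}) v) (dl \<psi> b (label t v))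
     \<longleftrightarrow> (ctl_sat t v \<psi> = b)"
proof (induction \<psi> arbitrary: b)
  case (Prop p) then show ?case by auto
next
  case (Neg x) then show ?case by auto
next
  case (Or x y) then show ?case by (cases b) auto
next
  case (Dn n x)
  show ?case
  proof (cases "n = 0")
    case True then show ?thesis by simp
  next
    case False
    have e1: "{c \<in> children t v. c \<in> {u. ctl_sat t u x = True}} = {c \<in> children t v. ctl_sat t c x}" by auto
    have e2: "{c \<in> children t v. c \<notin> {u. ctl_sat t u x = False}} = {c \<in> children t v. ctl_sat t c x}" by auto
    show ?thesis
    proof (cases b)
      case True
      then show ?thesis using False ex_card_sub_iff[OF fin, of n "{u. ctl_sat t u x = True}"] e1 by simp
    next
      case b: False
      then show ?thesis using False e2 by auto
    qed
  qed
next
  case (EXn x)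
  let ?G = "\<lambda>c. {u. ctl_sat t u (fst (dec c :: 'ap ctl \<times> bool)) = snd (dec c :: 'ap ctl \<times> bool)}"
  have d: "semI t ?G v (Dia 1 (enc x True)) \<longleftrightarrow> (\<exists>c\<in>children t v. c \<in> ?G (enc x True))"
    by (rule semI_Dia1[OF fin])
  have bx: "semI t ?G v (Box 1 (enc x False)) \<longleftrightarrow> (\<forall>c\<in>children t v. c \<in> ?G (enc x False))"
    by (rule semI_Box1[OF fin])
  show ?case
  proof (cases b)
    case True
    then show ?thesis using d by simp
  next
    case False
    then show ?thesis using bx by simp
  qed
next
  case (EUn x y)
  let ?G = "\<lambda>c. {u. ctl_sat t u (fst (dec c :: 'ap ctl \<times> bool)) = snd (dec c :: 'ap ctl \<times> bool)}"
  have d0: "semI t ?G v (Dia 1 (enc (EUn x y) True)) \<longleftrightarrow> (\<exists>c\<in>children t v. c \<in> ?G (enc (EUn x y) True))"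
    by (rule semI_Dia1[OF fin])
  have d: "semI t ?G v (Dia 1 (enc (EUn x y) True)) \<longleftrightarrow> (\<exists>c\<in>children t v. ctl_sat t c (EUn x y))"
    unfolding d0 by (simp del: ctl_sat.simps)
  have bx0: "semI t ?G v (Box 1 (enc (EUn x y) False)) \<longleftrightarrow> (\<forall>c\<in>children t v. c \<in> ?G (enc (EUn x y) False))"
    by (rule semI_Box1[OF fin])
  have bx: "semI t ?G v (Box 1 (enc (EUn x y) False)) \<longleftrightarrow> (\<forall>c\<in>children t v. \<not> ctl_sat t c (EUn x y))"
    unfolding bx0 by (simp del: ctl_sat.simps)
  show ?case
  proof (cases b)
    case True
    then show ?thesis using EUn.IH[of True] d EU_unfold[of t v x y] by (simp del: ctl_sat.simps)
  next
    case False
    then show ?thesis using EUn.IH[of False] bx EU_unfold[of t v x y] by (simp del: ctl_sat.simps)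
  qed
qed

definition QQ :: "'ap::countable ctl \<Rightarrow> nat set" where
  "QQ \<phi> = (\<lambda>(\<psi>, b). enc \<psi> b) ` (subf \<phi> \<times> UNIV)"

definition Aut :: "'ap::countable ctl \<Rightarrow> (nat, 'ap) hta" where
  "Aut \<phi> = \<lparr>states = QQ \<phi>, delta = (\<lambda>c \<sigma>. dl (fst (dec c :: 'ap ctl \<times> bool)) (snd (dec c :: 'ap ctl \<times> bool)) \<sigma>),
     init = enc \<phi> True,
     acc = {c \<in> QQ \<phi>. (\<exists>x y. fst (dec c :: 'ap ctl \<times> bool) = EUn x y) \<and> \<not> snd (dec c :: 'ap ctl \<times> bool)}\<rparr>"

definition kdA :: "'ap::countable ctl \<Rightarrow> nat \<Rightarrow> kind" where
  "kdA \<phi> c = (case fst (dec c :: 'ap ctl \<times> bool) of EUn x y \<Rightarrow> if snd (dec c :: 'ap ctl \<times> bool) then Existential else Universal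
     | _ \<Rightarrow> Transient)"

definition rankA :: "'ap::countable ctl \<Rightarrow> nat \<Rightarrow> nat" where
  "rankA \<phi> c = size (fst (dec c :: 'ap ctl \<times> bool)) * Suc (Max (QQ \<phi>)) + c"

lemma QQ_iff: "c \<in> QQ \<phi> \<longleftrightarrow> (\<exists>\<psi> b. c = enc \<psi> b \<and> \<psi> \<in> subf \<phi>)"
  unfolding QQ_def by auto

lemma QQ_finite: "finite (QQ \<phi>)"
  unfolding QQ_def by (intro finite_imageI finite_cartesian_product subf_finite) simp

lemma Aut_simps[simp]:
  fixes \<phi> :: "'ap::countable ctl"
  shows "states (Aut \<phi>) = QQ \<phi>" "init (Aut \<phi>) = enc \<phi> True"
  "delta (Aut \<phi>) (enc \<psi> b) \<sigma> = dl \<psi> b \<sigma>"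
  "acc (Aut \<phi>) = {c \<in> QQ \<phi>. (\<exists>x y. fst (dec c :: 'ap ctl \<times> bool) = EUn x y) \<and> \<not> snd (dec c :: 'ap ctl \<times> bool)}"
  unfolding Aut_def by simp_all

lemma Aut_wf: "hta_wf (Aut \<phi>)"
  unfolding hta_wf_def
proof (intro conjI ballI allI)
  show "finite (states (Aut \<phi>))" using QQ_finite by simp
  show "init (Aut \<phi>) \<in> states (Aut \<phi>)" using QQ_iff subf_refl by fastforce
  show "acc (Aut \<phi>) \<subseteq> states (Aut \<phi>)" by auto
  fix q \<sigma> a assume q: "q \<in> states (Aut \<phi>)" and a: "a \<in> patoms (delta (Aut \<phi>) q \<sigma>)"
  obtain \<psi> b where qe: "q = enc \<psi> b" and sf: "\<psi> \<in> subf \<phi>" using q unfolding Aut_simps QQ_iff by blast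
  have "a \<in> patoms (dl \<psi> b \<sigma>)" using a qe by simp
  then obtain \<psi>' b' where e: "atom_state a = enc \<psi>' b'" and s': "\<psi>' \<in> subf \<psi>" and i: "1 \<le> atom_index a" using dl_atoms_sub by blast
  have "\<psi>' \<in> subf \<phi>" using subf_trans[OF sf] s' by blast
  then have "atom_state a \<in> QQ \<phi>" unfolding QQ_iff using e by blast
  then show "atom_state a \<in> states (Aut \<phi>)" by simp
  show "1 \<le> atom_index a" using i .
qed

lemma rank_arith: "(c::nat) < B \<Longrightarrow> c' < B \<Longrightarrow> s * B + c = s' * B + c' \<Longrightarrow> c = c'"
proof -
  assume a: "c < B" "c' < B" "s * B + c = s' * B + c'"
  have "(s * B + c) mod B = c" using a(1) by simp
  moreover have "(s' * B + c') mod B = c'" using a(2) by simp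
  ultimately show ?thesis using a(3) by simp
qed

lemma rank_arith2: "(a::nat) < B \<Longrightarrow> s' < s \<Longrightarrow> s' * B + a \<le> s * B + c"
proof -
  assume "a < B" "s' < s"
  then have "Suc s' * B \<le> s * B" by (intro mult_le_mono1) simp
  then show ?thesis using \<open>a < B\<close> by simp
qed

lemma card_le1: "A \<subseteq> {x} \<Longrightarrow> card A \<le> 1"
  using card_mono[of "{x}" A] by simp

lemma Aut_lin: "lin (Aut \<phi>) (rankA \<phi>) (kdA \<phi>)"
  unfolding lin_def
proof (intro conjI ballI allI impI)
  define B where "B = Suc (Max (QQ \<phi>))"
  have ltB: "c \<in> QQ \<phi> \<Longrightarrow> c < B" for c unfolding B_def using QQ_finite[of \<phi>] by (meson Max_ge le_imp_less_Suc)
  show "inj_on (rankA \<phi>) (states (Aut \<phi>))"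
    unfolding inj_on_def rankA_def B_def[symmetric] using ltB rank_arith by simp blast
  fix q assume q: "q \<in> states (Aut \<phi>)"
  obtain \<psi> b where qe: "q = enc \<psi> b" and sf: "\<psi> \<in> subf \<phi>" using q unfolding Aut_simps QQ_iff by blast
  {
    fix \<sigma> a assume a: "a \<in> patoms (delta (Aut \<phi>) q \<sigma>)"
    then have a': "a \<in> patoms (dl \<psi> b \<sigma>)" using qe by simp
    then obtain \<psi>' b' where e: "atom_state a = enc \<psi>' b'" and sf': "\<psi>' \<in> subf \<psi>" using dl_atoms_sub by blast
    have "\<psi>' \<in> subf \<phi>" using subf_trans[OF sf] sf' by blast
    then have inQ: "atom_state a \<in> QQ \<phi>" unfolding QQ_iff using e by blast
    show "rankA \<phi> (atom_state a) \<le> rankA \<phi> q"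
    proof (cases "\<psi>' = \<psi>")
      case True
      then have "b' = b" using dl_self[OF a'] e by simp
      then show ?thesis using True e qe by simp
    next
      case False
      then have "size \<psi>' < size \<psi>" using subf_size_strict sf' by blast
      then show ?thesis unfolding rankA_def B_def[symmetric] using e qe ltB[OF inQ]
        by (simp add: rank_arith2)
    qed
  }
  {
    assume T: "kdA \<phi> q = Transient"
    fix \<sigma> a assume a: "a \<in> patoms (delta (Aut \<phi>) q \<sigma>)"
    then have a': "a \<in> patoms (dl \<psi> b \<sigma>)" using qe by simp
    show "atom_state a \<noteq> q"
    proof
      assume "atom_state a = q"
      then obtain x y where "\<psi> = EUn x y" using dl_self[OF a'] qe by blast
      then show False using T qe unfolding kdA_def by (simp split: if_splits)
    qed
  }
  {
    assume E: "kdA \<phi> q = Existential"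
    then obtain x y where \<psi>e: "\<psi> = EUn x y" and bt: "b = True" using qe unfolding kdA_def
      by (cases \<psi>) (auto split: if_splits)
    {
      fix \<sigma> a assume a: "a \<in> patoms (delta (Aut \<phi>) q \<sigma>)" and s: "atom_state a = q"
      then have a': "a \<in> patoms (dl \<psi> b \<sigma>)" using qe by simp
      show "a = Dia 1 q" using dl_self[OF a'] s qe bt by simp
    }
    {
      fix \<sigma> C assume C: "C \<in> dnf (delta (Aut \<phi>) q \<sigma>)"
      have ne: "\<And>a b'' z. a \<in> patoms (dl z b'' \<sigma>) \<Longrightarrow> (z = x \<or> z = y) \<Longrightarrow> atom_state a \<noteq> q"
        using dl_atoms_ne \<psi>e qe by fastforce
      have "C \<in> dnf (dl y True \<sigma>) \<or> (\<exists>D. D \<in> dnf (dl x True \<sigma>) \<and> C = D \<union> {Dia 1 q})"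
        using C qe \<psi>e bt by auto
      then have "{a \<in> C. atom_state a = q} \<subseteq> {Dia 1 q}"
        using ne dnf_sub by fastforce
      then show "card {a \<in> C. atom_state a = q} \<le> 1" by (rule card_le1)
    }
    show "q \<notin> acc (Aut \<phi>)" using qe bt by simp
  }
  {
    assume U: "kdA \<phi> q = Universal"
    then obtain x y where \<psi>e: "\<psi> = EUn x y" and bf: "b = False" using qe unfolding kdA_def
      by (cases \<psi>) (auto split: if_splits)
    {
      fix \<sigma> a assume a: "a \<in> patoms (delta (Aut \<phi>) q \<sigma>)" and s: "atom_state a = q"
      then have a': "a \<in> patoms (dl \<psi> b \<sigma>)" using qe by simp
      show "a = Box 1 q" using dl_self[OF a'] s qe bf by simp
    }
    {
      fix \<sigma> C assume C: "C \<in> cnf (delta (Aut \<phi>) q \<sigma>)"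
      have ne: "\<And>a b'' z. a \<in> patoms (dl z b'' \<sigma>) \<Longrightarrow> (z = x \<or> z = y) \<Longrightarrow> atom_state a \<noteq> q"
        using dl_atoms_ne \<psi>e qe by fastforce
      have "C \<in> cnf (dl y False \<sigma>) \<or> (\<exists>D. D \<in> cnf (dl x False \<sigma>) \<and> C = D \<union> {Box 1 q})"
        using C qe \<psi>e bf by auto
      then have "{a \<in> C. atom_state a = q} \<subseteq> {Box 1 q}"
        using ne cnf_sub by fastforce
      then show "card {a \<in> C. atom_state a = q} \<le> 1" by (rule card_le1)
    }
    show "q \<in> acc (Aut \<phi>)" using qe bf q \<psi>e by simp
  }
qed



lemma dl_cong_upd:
  fixes z \<chi> :: "'ap::countable ctl"
  assumes "size z < size \<chi>"
  shows "peval (semI t (G(enc \<chi> b' := X)) v) (dl z b \<sigma>) = peval (semI t G v) (dl z b \<sigma>)"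
proof (rule peval_cong)
  fix a assume a: "a \<in> patoms (dl z b \<sigma>)"
  have "atom_state a \<noteq> enc \<chi> b'" using dl_atoms_ne[OF a assms] .
  then show "semI t (G(enc \<chi> b' := X)) v a = semI t G v a" by (intro semI_cong) simp
qed

lemma dir2:
  fixes \<phi> :: "'ap::countable ctl"
  shows "hta_lang (Aut \<phi>) = ctl_lang \<phi>"
proof -
  have key: "(\<exists>r. is_run (Aut \<phi>) t [] r \<and> accepting (Aut \<phi>) r) \<longleftrightarrow> ctl_sat t [] \<phi>" if st: "sigma_tree t" for t
  proof -
    define G where "G = (\<lambda>c. {u. ctl_sat t u (fst (dec c :: 'ap ctl \<times> bool)) = snd (dec c :: 'ap ctl \<times> bool)})"
    have fin: "\<And>v. v \<in> nodes t \<Longrightarrow> finite (children t v)" using children_fin[OF st] .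
    have Genc: "G (enc \<psi> b) = {u. ctl_sat t u \<psi> = b}" for \<psi> :: "'ap ctl" and b unfolding G_def by simp
    have dls: "peval (semI t G v) (dl \<psi> b (label t v)) \<longleftrightarrow> (ctl_sat t v \<psi> = b)" if v: "v \<in> nodes t" for v \<psi> b
      unfolding G_def by (rule dl_sem[OF fin[OF v]])
    have stq: "\<exists>\<psi> b. q = enc \<psi> b \<and> \<psi> \<in> subf \<phi>" if "q \<in> states (Aut \<phi>)" for q
      using that unfolding Aut_simps QQ_iff by blast
    have F: "v \<in> G q \<longleftrightarrow> peval (semI t G v) (delta (Aut \<phi>) q (label t v))" if q: "q \<in> states (Aut \<phi>)" and v: "v \<in> nodes t" for q v
    proof -
      obtain \<psi> :: "'ap ctl" and b where qe: "q = enc \<psi> b" using stq[OF q] by blast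
      show ?thesis using dls[OF v, of \<psi> b] qe Genc by simp
    qed
    have EX: "\<exists>lev::nat list \<Rightarrow> nat. \<forall>v \<in> nodes t. v \<in> G q \<longrightarrow>
              peval (semI t (G(q := {v'. v' \<in> G q \<and> lev v' < lev v})) v) (delta (Aut \<phi>) q (label t v))"
      if q: "q \<in> states (Aut \<phi>)" and E: "kdA \<phi> q = Existential" for q
    proof -
      obtain \<psi> :: "'ap ctl" and b where qe: "q = enc \<psi> b" using stq[OF q] by blast
      then obtain x y where \<psi>e: "\<psi> = EUn x y" and bt: "b = True" using E unfolding kdA_def
        by (cases \<psi>) (auto split: if_splits)
      define lev where "lev v = (LEAST j. \<exists>p. euw t x y v j p)" for v
      have "peval (semI t (G(q := {v'. v' \<in> G q \<and> lev v' < lev v})) v) (delta (Aut \<phi>) q (label t v))"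
        if v: "v \<in> nodes t" and vG: "v \<in> G q" for v
      proof -
        define X where "X = {v'. v' \<in> G q \<and> lev v' < lev v}"
        have s1: "size x < size (EUn x y)" "size y < size (EUn x y)" by simp_all
        have "peval (semI t (G(q := X)) v) (delta (Aut \<phi>) q (label t v)) \<longleftrightarrow>
          peval (semI t (G(q := X)) v) (dl y True (label t v)) \<or>
          (peval (semI t (G(q := X)) v) (dl x True (label t v)) \<and> semI t (G(q := X)) v (Dia 1 q))"
          using qe \<psi>e bt by simp
        also have "\<dots> \<longleftrightarrow> ctl_sat t v y \<or> (ctl_sat t v x \<and> (\<exists>c\<in>children t v. c \<in> X))"
          using dl_cong_upd[OF s1(1), of t G True X v True] dl_cong_upd[OF s1(2), of t G True X v True]
            dls[OF v] semI_Dia1[OF fin[OF v], of "G(q := X)" q] qe \<psi>e bt by simp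
        finally have eq: "peval (semI t (G(q := X)) v) (delta (Aut \<phi>) q (label t v)) \<longleftrightarrow>
            ctl_sat t v y \<or> (ctl_sat t v x \<and> (\<exists>c\<in>children t v. c \<in> X))" .
        have "ctl_sat t v (EUn x y)" using vG qe \<psi>e bt Genc by (simp del: ctl_sat.simps)
        then have "\<exists>j p. euw t x y v j p" using sat_EU by blast
        then have "\<exists>p. euw t x y v (lev v) p" unfolding lev_def by (rule LeastI_ex)
        then obtain p where p: "euw t x y v (lev v) p" by blast
        have "ctl_sat t v y \<or> (ctl_sat t v x \<and> (\<exists>c\<in>children t v. c \<in> X))"
        proof (cases "lev v")
          case 0
          then show ?thesis using p unfolding euw_def by auto
        next
          case (Suc j)
          have w1: "euw t x y (p 1) j (\<lambda>k. p (Suc k))" using euw_shift p Suc by metis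
          have s1: "ctl_sat t v x \<and> p 1 \<in> children t v" using euw_Suc p Suc by metis
          have "ctl_sat t (p 1) (EUn x y)" using w1 sat_EU by blast
          then have "p 1 \<in> G q" using qe \<psi>e bt Genc by (simp del: ctl_sat.simps)
          moreover have "lev (p 1) \<le> j" unfolding lev_def by (rule Least_le) (use w1 in blast)
          ultimately have "p 1 \<in> X" unfolding X_def using Suc by simp
          then show ?thesis using s1 by blast
        qed
        then show ?thesis using eq unfolding X_def by blast
      qed
      then show ?thesis by blast
    qed
    have UN: "X \<subseteq> G q"
      if q: "q \<in> states (Aut \<phi>)" and U: "kdA \<phi> q = Universal" and X: "X \<subseteq> nodes t"
        and H: "\<forall>v\<in>X. peval (semI t (G(q := X)) v) (delta (Aut \<phi>) q (label t v))" for q X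
    proof
      obtain \<psi> :: "'ap ctl" and b where qe: "q = enc \<psi> b" using stq[OF q] by blast
      then obtain x y where \<psi>e: "\<psi> = EUn x y" and bf: "b = False" using U unfolding kdA_def
        by (cases \<psi>) (auto split: if_splits)
      have s1: "size x < size (EUn x y)" "size y < size (EUn x y)" by simp_all
      have HX: "\<not> ctl_sat t u y \<and> (\<not> ctl_sat t u x \<or> (\<forall>c\<in>children t u. c \<in> X))" if uX: "u \<in> X" for u
      proof -
        have u: "u \<in> nodes t" using uX X by blast
        have "peval (semI t (G(q := X)) u) (delta (Aut \<phi>) q (label t u)) \<longleftrightarrow>
          peval (semI t (G(q := X)) u) (dl y False (label t u)) \<and>
          (peval (semI t (G(q := X)) u) (dl x False (label t u)) \<or> semI t (G(q := X)) u (Box 1 q))"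
          using qe \<psi>e bf by simp
        also have "\<dots> \<longleftrightarrow> \<not> ctl_sat t u y \<and> (\<not> ctl_sat t u x \<or> (\<forall>c\<in>children t u. c \<in> X))"
          using dl_cong_upd[OF s1(1), of t G False X u False] dl_cong_upd[OF s1(2), of t G False X u False]
            dls[OF u] semI_Box1[OF fin[OF u], of "G(q := X)" q] qe \<psi>e bf by simp
        finally show ?thesis using H uX by blast
      qed
      fix v assume vX: "v \<in> X"
      show "v \<in> G q"
      proof (rule ccontr)
        assume "v \<notin> G q"
        then have "ctl_sat t v (EUn x y)" using qe \<psi>e bf Genc by (simp del: ctl_sat.simps)
        then obtain j p where p: "euw t x y v j p" using sat_EU by blast
        have "k \<le> j \<longrightarrow> p k \<in> X" for k
        proof (induction k)
          case 0 then show ?case using p vX unfolding euw_def by simp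
        next
          case (Suc k)
          show ?case
          proof
            assume kj: "Suc k \<le> j"
            then have pk: "p k \<in> X" using Suc by simp
            have "ctl_sat t (p k) x" using p kj unfolding euw_def by auto
            then have "\<forall>c\<in>children t (p k). c \<in> X" using HX[OF pk] by blast
            moreover have "p (Suc k) \<in> children t (p k)" using p kj unfolding euw_def by auto
            ultimately show "p (Suc k) \<in> X" by blast
          qed
        qed
        then have "p j \<in> X" by simp
        moreover have "ctl_sat t (p j) y" using p unfolding euw_def by simp
        ultimately show False using HX by blast
      qed
    qed
    have "(\<exists>r. is_run (Aut \<phi>) t [] r \<and> accepting (Aut \<phi>) r) \<longleftrightarrow> [] \<in> G (init (Aut \<phi>))"
      by (rule run_char[OF Aut_wf Aut_lin st]) (use F EX UN in blast)+
    then show ?thesis using Genc by simp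
  qed
  show ?thesis unfolding hta_lang_def ctl_lang_def using key by blast
qed

theorem theorem5p5:
  fixes dummy :: "'ap::finite"
  shows "(\<forall>A :: ('q, 'ap) hta. linear_hta A \<longrightarrow> (\<exists>\<phi> :: 'ap ctl. hta_lang A = ctl_lang \<phi>))
       \<and> (\<forall>\<phi> :: 'ap ctl. \<exists>A :: (nat, 'ap) hta. linear_hta A \<and> hta_lang A = ctl_lang \<phi>)"
proof (intro conjI allI impI)
  fix A :: "('q, 'ap) hta"
  assume "linear_hta A"
  then obtain rank kd where "hta_wf A" "lin A rank kd" using linear_hta_lin by blast
  then show "\<exists>\<phi> :: 'ap ctl. hta_lang A = ctl_lang \<phi>" by (rule dir1)
next
  fix \<phi> :: "'ap ctl"
  have "linear_hta (Aut \<phi>)" using linear_hta_lin Aut_wf Aut_lin by blast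
  then show "\<exists>A :: (nat, 'ap) hta. linear_hta A \<and> hta_lang A = ctl_lang \<phi>" using dir2 by blast
qed

end
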